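(* In the setting described in the context, fix real scalars $\sigma_w,\sigma_v$ and bounds $0<w_{\min}\le w_{\max}$, $0<\epsilon_{\min}\le\epsilon_{\max}$. For positive diagonal $E\in\mathbb R^{n\times n}$ and $W\in\mathbb R^{m\times m}$ let $\Pi_\tau(E,W)$ denote the system with transfer function $$\Pi_\tau(E,W)(s)=W^{1/2}R^T\big(sI+L_{e,s}^\tau RWR^T\big)^{-1}\begin{bmatrix}\sigma_wD_\tau^TE^{-1/2} & -\sigma_vL_{e,s}^\tau RW^{1/2}\end{bmatrix},\quad L_{e,s}^\tau=D_\tau^TE^{-1}D_\tau.$$ Then among all positive diagonal $E,W$ with $w_{\min}I\preceq W\preceq w_{\max}I$ and $\epsilon_{\min}I\preceq E\preceq\epsilon_{\max}I$, the choice $E=\epsilon_{\min}I$, $W=w_{\max}I$ minimizes $\|\Pi_\tau(E,W)\|_\infty$.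
   Context: Let $\mathcal G$ be an undirected, connected graph without self-loops, with node set $\{1,\dots,n\}$ ($n\ge2$) and edge set $\mathcal E$, $m=|\mathcal E|$. Give each edge an arbitrary orientation; the incidence matrix $D\in\mathbb R^{n\times m}$ has $D_{il}=1$ if node $i$ is the initial node of edge $l$, $-1$ if it is the terminal node, and $0$ otherwise. Fix a spanning tree $\mathcal G_\tau$ and order the edges so the first $n-1$ are tree edges; write $D=[D_\tau\ D_c]$ with $D_\tau\in\mathbb R^{n\times(n-1)}$. Set $T_\tau^c=(D_\tau^TD_\tau)^{-1}D_\tau^TD_c$ and $R=[I_{n-1}\ T_\tau^c]\in\mathbb R^{(n-1)\times m}$. Powers of positive diagonal matrices are taken entrywise; $\preceq$ is the Loewner order. For a stable transfer matrix $\Phi(s)$, $\|\Phi\|_\infty=\sup_{\omega\in\mathbb R}\bar\sigma(\Phi(j\omega))$ where $\bar\sigma$ is the largest singular value. *)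

theory Defs
  imports Complex_Main "Jordan_Normal_Form.Matrix" "Jordan_Normal_Form.Char_Poly"
begin

text \<open>Nodes are 0,...,n-1 (the paper's 1..n shifted by one). The edge list es gives each
  edge an orientation (initial node, terminal node); its order is the edge ordering.\<close>

definition undirected_rel :: "(nat \<times> nat) list \<Rightarrow> (nat \<times> nat) set" where
  "undirected_rel es = set es \<union> (set es)\<inverse>"

definition graph_connected :: "nat \<Rightarrow> (nat \<times> nat) list \<Rightarrow> bool" where
  "graph_connected n es = (\<forall>i<n. \<forall>j<n. (i, j) \<in> (undirected_rel es)\<^sup>*)"

definition valid_graph :: "nat \<Rightarrow> (nat \<times> nat) list \<Rightarrow> bool" where
  "valid_graph n es = ((\<forall>(i, j) \<in> set es. i < n \<and> j < n \<and> i \<noteq> j)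
      \<and> distinct (map (\<lambda>(i, j). {i, j}) es))"

text \<open>The first n-1 edges form a spanning tree: a connected subgraph on all n nodes
  with exactly n-1 edges (equivalently, a connected acyclic spanning subgraph).\<close>
definition first_edges_spanning_tree :: "nat \<Rightarrow> (nat \<times> nat) list \<Rightarrow> bool" where
  "first_edges_spanning_tree n es =
     (n - 1 \<le> length es \<and> graph_connected n (take (n - 1) es))"

definition incidence :: "nat \<Rightarrow> (nat \<times> nat) list \<Rightarrow> real mat" where
  "incidence n es = mat n (length es) (\<lambda>(i, l).
      if fst (es ! l) = i then 1 else if snd (es ! l) = i then -1 else 0)"

definition D_tau :: "nat \<Rightarrow> (nat \<times> nat) list \<Rightarrow> real mat" where
  "D_tau n es = mat n (n - 1) (\<lambda>(i, l). incidence n es $$ (i, l))"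

definition D_c :: "nat \<Rightarrow> (nat \<times> nat) list \<Rightarrow> real mat" where
  "D_c n es = mat n (length es - (n - 1)) (\<lambda>(i, l). incidence n es $$ (i, l + (n - 1)))"

definition minv :: "'a :: semiring_1 mat \<Rightarrow> 'a mat" where
  "minv A = (SOME B. B \<in> carrier_mat (dim_row A) (dim_row A) \<and>
                     A * B = 1\<^sub>m (dim_row A) \<and> B * A = 1\<^sub>m (dim_row A))"

definition T_tau_c :: "nat \<Rightarrow> (nat \<times> nat) list \<Rightarrow> real mat" where
  "T_tau_c n es = minv ((D_tau n es)\<^sup>T * D_tau n es) * (D_tau n es)\<^sup>T * D_c n es"

definition R_mat :: "nat \<Rightarrow> (nat \<times> nat) list \<Rightarrow> real mat" where
  "R_mat n es = mat (n - 1) (length es) (\<lambda>(i, l).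
      if l < n - 1 then (if i = l then 1 else 0) else T_tau_c n es $$ (i, l - (n - 1)))"

definition diag_powr :: "real mat \<Rightarrow> real \<Rightarrow> real mat" where
  "diag_powr E p = mat (dim_row E) (dim_col E) (\<lambda>(i, j). if i = j then E $$ (i, i) powr p else 0)"

definition pos_diag :: "nat \<Rightarrow> real mat \<Rightarrow> bool" where
  "pos_diag k E = (E \<in> carrier_mat k k \<and> diagonal_mat E \<and> (\<forall>i<k. E $$ (i, i) > 0))"

definition loewner_le :: "nat \<Rightarrow> real mat \<Rightarrow> real mat \<Rightarrow> bool" where
  "loewner_le k A B = (A \<in> carrier_mat k k \<and> B \<in> carrier_mat k k \<and>
      (\<forall>x \<in> carrier_vec k. x \<bullet> ((B - A) *\<^sub>v x) \<ge> 0))"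

definition adjoint_c :: "complex mat \<Rightarrow> complex mat" where
  "adjoint_c A = mat (dim_col A) (dim_row A) (\<lambda>(i, j). cnj (A $$ (j, i)))"

text \<open>Largest singular value: square root of the largest eigenvalue of A^H A
  (whose eigenvalues are real and nonnegative).\<close>
definition max_sv :: "complex mat \<Rightarrow> real" where
  "max_sv A = sqrt (Max {x :: real. eigenvalue (adjoint_c A * A) (complex_of_real x)})"

definition hinf_norm :: "(complex \<Rightarrow> complex mat) \<Rightarrow> real" where
  "hinf_norm Phi = (SUP \<omega> :: real. max_sv (Phi (\<i> * complex_of_real \<omega>)))"

definition L_es :: "nat \<Rightarrow> (nat \<times> nat) list \<Rightarrow> real mat \<Rightarrow> real mat" where
  "L_es n es E = (D_tau n es)\<^sup>T * diag_powr E (-1) * D_tau n es"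

definition Pi_tau :: "nat \<Rightarrow> (nat \<times> nat) list \<Rightarrow> real \<Rightarrow> real \<Rightarrow> real mat \<Rightarrow> real mat
                        \<Rightarrow> complex \<Rightarrow> complex mat" where
  "Pi_tau n es \<sigma>w \<sigma>v E W s =
     (let m = length es; R = R_mat n es; L = L_es n es E;
          left = diag_powr W (1/2) * R\<^sup>T;
          A = L * R * W * R\<^sup>T;
          B1 = \<sigma>w \<cdot>\<^sub>m ((D_tau n es)\<^sup>T * diag_powr E (-1/2));
          B2 = (- \<sigma>v) \<cdot>\<^sub>m (L * R * diag_powr W (1/2));
          B = mat (n - 1) (n + m) (\<lambda>(i, j). if j < n then B1 $$ (i, j) else B2 $$ (i, j - n))
      in map_mat complex_of_real left
         * minv (s \<cdot>\<^sub>m 1\<^sub>m (n - 1) + map_mat complex_of_real A)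
         * map_mat complex_of_real B)"

end

theory Submission
  imports Defs "HOL-Analysis.Function_Topology" "HOL-Analysis.Elementary_Metric_Spaces"
begin

definition nsq :: "complex vec \<Rightarrow> real" where "nsq x = Re (x \<bullet>c x)"

lemma sprod_sum: "v \<bullet> w = (\<Sum>i<dim_vec w. v $ i * w $ i)"
  unfolding scalar_prod_def by (simp add: atLeast0LessThan)

lemma cip_sum: assumes "x \<in> carrier_vec n" "y \<in> carrier_vec n"
  shows "x \<bullet>c y = (\<Sum>i<n. x $ i * cnj (y $ i))"
  using assms by (simp add: sprod_sum)

lemma cip_sym: assumes "x \<in> carrier_vec n" "y \<in> carrier_vec n"
  shows "y \<bullet>c x = cnj (x \<bullet>c y)"
  using assms by (simp add: cip_sum[OF assms] cip_sum[OF assms(2,1)] cnj_sum mult.commute)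

lemma cip_self_real: assumes "x \<in> carrier_vec n"
  shows "x \<bullet>c x = complex_of_real (nsq x)"
proof -
  have "x \<bullet>c x \<ge> 0" by auto
  then show ?thesis unfolding nsq_def by (simp add: less_eq_complex_def complex_eq_iff)
qed

lemma nsq_nonneg: "nsq x \<ge> 0"
proof -
  have "x \<bullet>c x \<ge> 0" by auto
  then show ?thesis unfolding nsq_def by (simp add: less_eq_complex_def)
qed

lemma nsq_eq_0: assumes "x \<in> carrier_vec n" shows "nsq x = 0 \<longleftrightarrow> x = 0\<^sub>v n"
proof -
  have "nsq x = 0 \<longleftrightarrow> x \<bullet>c x = 0" using cip_self_real[OF assms] by auto
  also have "\<dots> \<longleftrightarrow> x = 0\<^sub>v n" using conjugate_square_eq_0_vec[OF assms] by simp
  finally show ?thesis .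
qed

lemma adjoint_c_carrier[simp]: "A \<in> carrier_mat r c \<Longrightarrow> adjoint_c A \<in> carrier_mat c r"
  unfolding adjoint_c_def by auto

lemma adjoint_c_dims[simp]: "dim_row (adjoint_c A) = dim_col A" "dim_col (adjoint_c A) = dim_row A"
  unfolding adjoint_c_def by auto

lemma adjoint_c_index[simp]: "i < dim_col A \<Longrightarrow> j < dim_row A \<Longrightarrow> adjoint_c A $$ (i, j) = cnj (A $$ (j, i))"
  unfolding adjoint_c_def by auto

lemma adjoint_c_adjoint_c[simp]: "adjoint_c (adjoint_c A) = A"
  by (rule eq_matI) auto

lemma mult_mat_vec_sum: assumes "A \<in> carrier_mat r c" "x \<in> carrier_vec c" "i < r"
  shows "(A *\<^sub>v x) $ i = (\<Sum>j<c. A $$ (i, j) * x $ j)"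
  using assms by (simp add: sprod_sum)

lemma adjoint_c_cip: assumes A: "A \<in> carrier_mat r c" and x: "x \<in> carrier_vec c" and y: "y \<in> carrier_vec r"
  shows "(A *\<^sub>v x) \<bullet>c y = x \<bullet>c (adjoint_c A *\<^sub>v y)"
proof -
  have Ax: "A *\<^sub>v x \<in> carrier_vec r" using A x by auto
  have Ay: "adjoint_c A *\<^sub>v y \<in> carrier_vec c" by (rule mult_mat_vec_carrier[OF adjoint_c_carrier[OF A] y])
  have "(A *\<^sub>v x) \<bullet>c y = (\<Sum>i<r. (\<Sum>j<c. A $$ (i, j) * x $ j) * cnj (y $ i))"
    using cip_sum[OF Ax y] mult_mat_vec_sum[OF A x] by simp
  also have "\<dots> = (\<Sum>i<r. \<Sum>j<c. A $$ (i, j) * x $ j * cnj (y $ i))"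
    by (simp add: sum_distrib_right)
  also have "\<dots> = (\<Sum>j<c. \<Sum>i<r. A $$ (i, j) * x $ j * cnj (y $ i))"
    by (rule sum.swap)
  also have "\<dots> = (\<Sum>j<c. x $ j * cnj (\<Sum>i<r. adjoint_c A $$ (j, i) * y $ i))"
    using A by (simp add: sum_distrib_left cnj_sum mult_ac)
  also have "\<dots> = x \<bullet>c (adjoint_c A *\<^sub>v y)"
    using cip_sum[OF x Ay] mult_mat_vec_sum[OF adjoint_c_carrier[OF A] y] by simp
  finally show ?thesis .
qed

lemma adjoint_c_mult: assumes "A \<in> carrier_mat r n" "B \<in> carrier_mat n c"
  shows "adjoint_c (A * B) = adjoint_c B * adjoint_c A"
  using assms by (intro eq_matI) (auto simp: scalar_prod_def cnj_sum mult.commute)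

lemma adjoint_c_map_real: "adjoint_c (map_mat complex_of_real A) = map_mat complex_of_real (transpose_mat A)"
  by (rule eq_matI) auto

lemma cip_add_left: "(x::complex vec) \<in> carrier_vec n \<Longrightarrow> y \<in> carrier_vec n \<Longrightarrow> z \<in> carrier_vec n \<Longrightarrow>
  (x + y) \<bullet>c z = x \<bullet>c z + y \<bullet>c z"
  by (simp add: add_scalar_prod_distrib[of _ n])

lemma cip_add_right: "(x::complex vec) \<in> carrier_vec n \<Longrightarrow> y \<in> carrier_vec n \<Longrightarrow> z \<in> carrier_vec n \<Longrightarrow>
  x \<bullet>c (y + z) = x \<bullet>c y + x \<bullet>c z"
  by (simp add: conjugate_add_vec[of _ n] scalar_prod_add_distrib[of _ n])

lemma cip_smult_left: "(x::complex vec) \<in> carrier_vec n \<Longrightarrow> y \<in> carrier_vec n \<Longrightarrow> (a \<cdot>\<^sub>v x) \<bullet>c y = a * (x \<bullet>c y)"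
  by simp

lemma cip_smult_right: "(x::complex vec) \<in> carrier_vec n \<Longrightarrow> y \<in> carrier_vec n \<Longrightarrow> x \<bullet>c (a \<cdot>\<^sub>v y) = cnj a * (x \<bullet>c y)"
  by (simp add: conjugate_smult_vec)

lemma cip_minus_left: "(x::complex vec) \<in> carrier_vec n \<Longrightarrow> y \<in> carrier_vec n \<Longrightarrow> z \<in> carrier_vec n \<Longrightarrow>
  (x - y) \<bullet>c z = x \<bullet>c z - y \<bullet>c z"
  by (simp add: minus_scalar_prod_distrib[of _ n])

lemma cip_minus_right: "(x::complex vec) \<in> carrier_vec n \<Longrightarrow> y \<in> carrier_vec n \<Longrightarrow> z \<in> carrier_vec n \<Longrightarrow>
  x \<bullet>c (y - z) = x \<bullet>c y - x \<bullet>c z"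
proof -
  assume a: "x \<in> carrier_vec n" "y \<in> carrier_vec n" "z \<in> carrier_vec n"
  have "conjugate (y - z) = conjugate y - conjugate z"
    using a by (intro eq_vecI) (auto simp: complex_cnj_diff)
  then show ?thesis using a by (simp add: scalar_prod_minus_distrib[of _ n])
qed

lemma nsq_sum: assumes "x \<in> carrier_vec n" shows "nsq x = (\<Sum>i<n. (cmod (x $ i))^2)"
proof -
  have "x \<bullet>c x = (\<Sum>i<n. x $ i * cnj (x $ i))" by (rule cip_sum[OF assms assms])
  also have "\<dots> = (\<Sum>i<n. complex_of_real ((cmod (x $ i))^2))"
    using complex_norm_square by (intro sum.cong) (auto simp del: of_real_power)
  finally show ?thesis unfolding nsq_def by simp
qed

lemma quad_sum: assumes H: "H \<in> carrier_mat k k" and x: "x \<in> carrier_vec k"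
  shows "(H *\<^sub>v x) \<bullet>c x = (\<Sum>i<k. \<Sum>j<k. H $$ (i, j) * x $ j * cnj (x $ i))"
proof -
  have Hx: "H *\<^sub>v x \<in> carrier_vec k" using H x by auto
  show ?thesis using cip_sum[OF Hx x] mult_mat_vec_sum[OF H x]
    by (simp add: sum_distrib_right)
qed

lemma cont_coord[continuous_intros]: "continuous_on A f \<Longrightarrow> continuous_on A (\<lambda>x. (f x :: nat \<Rightarrow> 'a::topological_space) i)"
  by (rule continuous_on_compose2[OF continuous_on_product_coordinates]) auto

lemma smult_one_mult_vec: assumes x: "(x :: complex vec) \<in> carrier_vec k"
  shows "(c \<cdot>\<^sub>m 1\<^sub>m k) *\<^sub>v x = c \<cdot>\<^sub>v x"
proof (rule eq_vecI)
  fix i assume "i < dim_vec (c \<cdot>\<^sub>v x)"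
  then have i: "i < k" using x by simp
  have "((c \<cdot>\<^sub>m 1\<^sub>m k) *\<^sub>v x) $ i = (\<Sum>j<k. (c \<cdot>\<^sub>m 1\<^sub>m k) $$ (i, j) * x $ j)"
    by (rule mult_mat_vec_sum[OF _ x i]) auto
  also have "\<dots> = (\<Sum>j<k. if j = i then c * x $ i else 0)"
    using i by (intro sum.cong) auto
  also have "\<dots> = c * x $ i" using i by simp
  finally show "((c \<cdot>\<^sub>m 1\<^sub>m k) *\<^sub>v x) $ i = (c \<cdot>\<^sub>v x) $ i" using i x by simp
qed (use x in auto)

lemma psd_zero_kernel:
  assumes A: "A \<in> carrier_mat k k" and herm: "adjoint_c A = A"
    and psd: "\<And>x. x \<in> carrier_vec k \<Longrightarrow> Re ((A *\<^sub>v x) \<bullet>c x) \<ge> 0"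
    and v: "v \<in> carrier_vec k" and q0: "Re ((A *\<^sub>v v) \<bullet>c v) = 0"
  shows "A *\<^sub>v v = 0\<^sub>v k"
proof (rule ccontr)
  assume ne: "A *\<^sub>v v \<noteq> 0\<^sub>v k"
  define y where "y = A *\<^sub>v v"
  have y: "y \<in> carrier_vec k" unfolding y_def using A v by auto
  have Ay: "A *\<^sub>v y \<in> carrier_vec k" using A y by auto
  define Y where "Y = nsq y"
  define Q where "Q = Re ((A *\<^sub>v y) \<bullet>c y)"
  have Ypos: "Y > 0" unfolding Y_def using nsq_eq_0[OF y] nsq_nonneg[of y] ne y_def by auto
  have Qnn: "Q \<ge> 0" unfolding Q_def using psd[OF y] .
  define t where "t = Y / (Q + 1)"
  have tpos: "t > 0" unfolding t_def using Ypos Qnn by auto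
  have x: "v - complex_of_real t \<cdot>\<^sub>v y \<in> carrier_vec k" using v y by auto
  have Ax: "A *\<^sub>v (v - complex_of_real t \<cdot>\<^sub>v y) = y - complex_of_real t \<cdot>\<^sub>v (A *\<^sub>v y)"
    unfolding y_def using A v y_def y by (simp add: mult_minus_distrib_mat_vec[OF A v] mult_mat_vec[OF A])
  have c1: "(A *\<^sub>v y) \<bullet>c v = y \<bullet>c y"
    using adjoint_c_cip[OF A y v] herm y_def by simp
  have "(A *\<^sub>v (v - complex_of_real t \<cdot>\<^sub>v y)) \<bullet>c (v - complex_of_real t \<cdot>\<^sub>v y)
     = (y \<bullet>c v - complex_of_real t * ((A *\<^sub>v y) \<bullet>c v))
       - (complex_of_real t * (y \<bullet>c y) - complex_of_real t * complex_of_real t * ((A *\<^sub>v y) \<bullet>c y))"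
    unfolding Ax using y v Ay
    by (simp add: cip_minus_left[of _ k] cip_minus_right[of _ k] cip_smult_right[of _ k] algebra_simps)
  also have "y \<bullet>c v = (A *\<^sub>v v) \<bullet>c v" unfolding y_def ..
  finally have "Re ((A *\<^sub>v (v - complex_of_real t \<cdot>\<^sub>v y)) \<bullet>c (v - complex_of_real t \<cdot>\<^sub>v y))
     = - 2 * t * Y + t * t * Q"
    using q0 c1 unfolding Y_def Q_def nsq_def by simp
  moreover have "- 2 * t * Y + t * t * Q < 0"
  proof -
    have "t * Q < Y" unfolding t_def using Ypos Qnn by (simp add: field_simps)
    then have "t * (t * Q) < t * Y" using tpos by simp
    then show ?thesis using tpos Ypos by (simp add: algebra_simps)
  qed
  ultimately show False using psd[OF x] by simp
qed

lemma hermitian_max_eig: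
  assumes H: "H \<in> carrier_mat k k" and k: "0 < k" and herm: "adjoint_c H = H"
  shows "\<exists>\<mu> v. v \<in> carrier_vec k \<and> v \<noteq> 0\<^sub>v k \<and> H *\<^sub>v v = complex_of_real \<mu> \<cdot>\<^sub>v v
     \<and> (\<forall>x \<in> carrier_vec k. Re ((H *\<^sub>v x) \<bullet>c x) \<le> \<mu> * nsq x)"
proof -
  define zz :: "(nat \<Rightarrow> real) \<times> (nat \<Rightarrow> real) \<Rightarrow> nat \<Rightarrow> complex" where
    "zz p i = complex_of_real (fst p i) + \<i> * complex_of_real (snd p i)" for p i
  define \<phi> :: "(nat \<Rightarrow> real) \<times> (nat \<Rightarrow> real) \<Rightarrow> real" where
    "\<phi> p = Re (\<Sum>i<k. \<Sum>j<k. H $$ (i, j) * zz p j * cnj (zz p i))" for p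
  define K1 :: "(nat \<Rightarrow> real) set" where "K1 = PiE UNIV (\<lambda>i. if i < k then {-1..1} else {0})"
  define S where "S = (K1 \<times> K1) \<inter> {p. (\<Sum>i<k. (fst p i)^2 + (snd p i)^2) = 1}"
  have "compactin (product_topology (\<lambda>i. euclidean) UNIV) K1"
    unfolding K1_def compactin_PiE by auto
  then have cK1: "compact K1" unfolding euclidean_product_topology by simp
  have "closed {p :: (nat \<Rightarrow> real) \<times> (nat \<Rightarrow> real). (\<Sum>i<k. (fst p i)^2 + (snd p i)^2) = 1}"
    by (rule closed_Collect_eq) (intro continuous_intros)+
  then have cS: "compact S" unfolding S_def using cK1 by (simp add: compact_Int_closed compact_Times)
  define f0 :: "nat \<Rightarrow> real" where "f0 = (\<lambda>i. if i = 0 then 1 else 0)"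
  have "(\<Sum>i<k. (f0 i)^2 + ((\<lambda>_. 0::real) i)^2) = (\<Sum>i<k. if i = 0 then 1 else 0)"
    by (intro sum.cong) (auto simp: f0_def)
  also have "\<dots> = 1" using k by simp
  finally have "(f0, \<lambda>_. 0) \<in> S" unfolding S_def K1_def using k by (auto simp: f0_def)
  then have Sne: "S \<noteq> {}" by auto
  have "continuous_on S \<phi>" unfolding \<phi>_def zz_def by (intro continuous_intros)
  from continuous_attains_sup[OF cS Sne this] obtain fs where fs: "fs \<in> S" and fsmax: "\<And>f. f \<in> S \<Longrightarrow> \<phi> f \<le> \<phi> fs"
    by blast
  define \<mu> where "\<mu> = \<phi> fs"
  define v where "v = vec k (zz fs)"
  have v: "v \<in> carrier_vec k" unfolding v_def by auto
  have cm: "(cmod (zz p i))^2 = (fst p i)^2 + (snd p i)^2" for p i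
    unfolding zz_def by (simp add: cmod_power2)
  have phi_quad: "Re ((H *\<^sub>v x) \<bullet>c x) = \<phi> p" if x: "x \<in> carrier_vec k" and xp: "\<And>i. i < k \<Longrightarrow> x $ i = zz p i" for x p
    unfolding \<phi>_def using quad_sum[OF H x] xp by simp
  have nsqv: "nsq v = 1" using fs unfolding S_def v_def by (simp add: nsq_sum[of _ k] cm)
  have ray: "Re ((H *\<^sub>v x) \<bullet>c x) \<le> \<mu> * nsq x" if x: "x \<in> carrier_vec k" for x
  proof (cases "x = 0\<^sub>v k")
    case True then show ?thesis using H by (simp add: nsq_def)
  next
    case False
    define r where "r = sqrt (nsq x)"
    have rpos: "r > 0" unfolding r_def using nsq_eq_0[OF x] nsq_nonneg[of x] False by auto
    define f where "f = (\<lambda>i. if i < k then Re (x $ i) / r else 0, \<lambda>i. if i < k then Im (x $ i) / r else 0)"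
    have sumx: "(\<Sum>i<k. (cmod (x $ i))^2) = r^2" unfolding r_def using nsq_sum[OF x] nsq_nonneg[of x] by simp
    have zf: "zz f i = x $ i / complex_of_real r" if "i < k" for i
      unfolding zz_def f_def using that rpos by (simp add: complex_eq_iff)
    have fS: "f \<in> S"
    proof -
      have b: "cmod (x $ i) \<le> r" if "i < k" for i
      proof -
        have "(cmod (x $ i))^2 \<le> (\<Sum>j<k. (cmod (x $ j))^2)"
          using that by (intro member_le_sum) auto
        then have "(cmod (x $ i))^2 \<le> r^2" using sumx by simp
        then show "cmod (x $ i) \<le> r" using rpos by (simp add: power2_le_iff_abs_le)
      qed
      have "\<bar>Re (x $ i)\<bar> \<le> r" "\<bar>Im (x $ i)\<bar> \<le> r" if "i < k" for i
        using b[OF that] abs_Re_le_cmod[of "x $ i"] abs_Im_le_cmod[of "x $ i"] by linarith+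
      then have "fst f \<in> K1" "snd f \<in> K1" unfolding K1_def f_def using rpos
        by (auto simp: abs_le_iff divide_le_eq le_divide_eq) (metis neg_le_iff_le minus_minus)+
      moreover have "(\<Sum>i<k. (fst f i)^2 + (snd f i)^2) = 1"
      proof -
        have "(\<Sum>i<k. (fst f i)^2 + (snd f i)^2) = (\<Sum>i<k. (cmod (x $ i))^2 / r^2)"
          unfolding f_def by (intro sum.cong) (auto simp: cmod_power2 power_divide add_divide_distrib)
        also have "\<dots> = 1" using sumx rpos by (simp add: sum_divide_distrib[symmetric])
        finally show ?thesis .
      qed
      ultimately show ?thesis unfolding S_def by (cases f) auto
    qed
    have "\<phi> f = Re ((H *\<^sub>v x) \<bullet>c x) / r^2"
    proof -
      have "(\<Sum>i<k. \<Sum>j<k. H $$ (i, j) * zz f j * cnj (zz f i))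
          = (\<Sum>i<k. \<Sum>j<k. H $$ (i, j) * x $ j * cnj (x $ i)) / complex_of_real (r^2)"
        unfolding sum_divide_distrib by (intro sum.cong refl) (auto simp: zf power2_eq_square)
      then show ?thesis unfolding \<phi>_def quad_sum[OF H x] by (simp add: Re_divide_of_real)
    qed
    with fsmax[OF fS] have "Re ((H *\<^sub>v x) \<bullet>c x) / r^2 \<le> \<mu>" unfolding \<mu>_def by simp
    then have "Re ((H *\<^sub>v x) \<bullet>c x) \<le> \<mu> * r^2" using rpos by (simp add: divide_le_eq)
    moreover have "r^2 = nsq x" unfolding r_def using nsq_nonneg[of x] by simp
    ultimately show ?thesis by simp
  qed
  have vq: "Re ((H *\<^sub>v v) \<bullet>c v) = \<mu>"
    unfolding \<mu>_def by (rule phi_quad[OF v]) (simp add: v_def)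
  define A where "A = complex_of_real \<mu> \<cdot>\<^sub>m 1\<^sub>m k - H"
  have A: "A \<in> carrier_mat k k" unfolding A_def using H by auto
  have Ax: "A *\<^sub>v x = complex_of_real \<mu> \<cdot>\<^sub>v x - H *\<^sub>v x" if x: "x \<in> carrier_vec k" for x
  proof -
    have "A *\<^sub>v x = (complex_of_real \<mu> \<cdot>\<^sub>m 1\<^sub>m k) *\<^sub>v x - H *\<^sub>v x"
      unfolding A_def by (rule minus_mult_distrib_mat_vec[OF _ H x]) auto
    then show ?thesis unfolding smult_one_mult_vec[OF x] .
  qed
  have Aq: "Re ((A *\<^sub>v x) \<bullet>c x) = \<mu> * nsq x - Re ((H *\<^sub>v x) \<bullet>c x)" if x: "x \<in> carrier_vec k" for x
    unfolding Ax[OF x] using x H by (simp add: cip_minus_left[of _ k] nsq_def)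
  have Aherm: "adjoint_c A = A"
  proof (rule eq_matI)
    fix i j assume ij: "i < dim_row A" "j < dim_col A"
    then have i: "i < k" and j: "j < k" using A by auto
    have hc: "cnj (H $$ (j, i)) = H $$ (i, j)"
      using arg_cong[OF herm, of "\<lambda>M. M $$ (i, j)"] H i j by simp
    show "adjoint_c A $$ (i, j) = A $$ (i, j)"
      using A i j H hc unfolding A_def by simp
  qed (use A in auto)
  have "A *\<^sub>v v = 0\<^sub>v k"
    by (rule psd_zero_kernel[OF A Aherm _ v]) (use Aq ray vq nsqv v in auto)
  then have "H *\<^sub>v v = complex_of_real \<mu> \<cdot>\<^sub>v v" using Ax[OF v] H v
    by (metis (no_types, lifting) carrier_vecD mult_mat_vec_carrier eq_vecI index_minus_vec(1) index_zero_vec(1) index_smult_vec(2) right_minus_eq)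
  moreover have "v \<noteq> 0\<^sub>v k" using nsqv nsq_eq_0[OF v] by auto
  ultimately show ?thesis using v ray by blast
qed


section \<open>Largest singular value\<close>

lemma adj_mult_herm: assumes A: "A \<in> carrier_mat r c"
  shows "adjoint_c (adjoint_c A * A) = adjoint_c A * A"
  using adjoint_c_mult[OF adjoint_c_carrier[OF A] A] by simp

lemma adj_mult_quad: assumes A: "A \<in> carrier_mat r c" and y: "y \<in> carrier_vec c"
  shows "((adjoint_c A * A) *\<^sub>v y) \<bullet>c y = (A *\<^sub>v y) \<bullet>c (A *\<^sub>v y)"
proof -
  have "(adjoint_c A * A) *\<^sub>v y = adjoint_c A *\<^sub>v (A *\<^sub>v y)"
    using A y by (simp add: assoc_mult_mat_vec[of _ c r _ c])
  also have "(adjoint_c A *\<^sub>v (A *\<^sub>v y)) \<bullet>c y = (A *\<^sub>v y) \<bullet>c (A *\<^sub>v y)"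
    using adjoint_c_cip[OF adjoint_c_carrier[OF A] _ y, of "A *\<^sub>v y"] A y by simp
  finally show ?thesis .
qed

lemma max_sv_char:
  assumes A: "A \<in> carrier_mat r c" and c: "0 < c"
  shows "max_sv A \<ge> 0"
    and "\<And>y. y \<in> carrier_vec c \<Longrightarrow> nsq (A *\<^sub>v y) \<le> (max_sv A)^2 * nsq y"
    and "\<And>C. C \<ge> 0 \<Longrightarrow> (\<And>y. y \<in> carrier_vec c \<Longrightarrow> nsq (A *\<^sub>v y) \<le> C^2 * nsq y) \<Longrightarrow> max_sv A \<le> C"
proof -
  define H where "H = adjoint_c A * A"
  have H: "H \<in> carrier_mat c c" unfolding H_def using A by auto
  have herm: "adjoint_c H = H" unfolding H_def by (rule adj_mult_herm[OF A])
  have q: "Re ((H *\<^sub>v y) \<bullet>c y) = nsq (A *\<^sub>v y)" if y: "y \<in> carrier_vec c" for y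
    unfolding H_def adj_mult_quad[OF A y] nsq_def ..
  from hermitian_max_eig[OF H c herm] obtain \<mu> v where v: "v \<in> carrier_vec c" "v \<noteq> 0\<^sub>v c"
    and Hv: "H *\<^sub>v v = complex_of_real \<mu> \<cdot>\<^sub>v v"
    and ray: "\<And>x. x \<in> carrier_vec c \<Longrightarrow> Re ((H *\<^sub>v x) \<bullet>c x) \<le> \<mu> * nsq x" by blast
  have eigq: "Re ((H *\<^sub>v w) \<bullet>c w) = x * nsq w" if w: "w \<in> carrier_vec c" and Hw: "H *\<^sub>v w = complex_of_real x \<cdot>\<^sub>v w" for w x
    unfolding Hw using w by (simp add: nsq_def)
  have nv: "nsq v > 0" using v nsq_eq_0[OF v(1)] nsq_nonneg[of v] by auto
  define Sx where "Sx = {x :: real. eigenvalue H (complex_of_real x)}"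
  have muS: "\<mu> \<in> Sx" unfolding Sx_def eigenvalue_def eigenvector_def using v Hv H by auto
  have le: "x \<le> \<mu>" if "x \<in> Sx" for x
  proof -
    from that obtain w where w: "w \<in> carrier_vec c" "w \<noteq> 0\<^sub>v c" and Hw: "H *\<^sub>v w = complex_of_real x \<cdot>\<^sub>v w"
      unfolding Sx_def eigenvalue_def eigenvector_def using H by auto
    have "nsq w > 0" using w nsq_eq_0[OF w(1)] nsq_nonneg[of w] by auto
    moreover have "x * nsq w \<le> \<mu> * nsq w" using ray[OF w(1)] eigq[OF w(1) Hw] by simp
    ultimately show ?thesis by simp
  qed
  have fin: "finite Sx"
  proof -
    have "char_poly H \<noteq> 0" using degree_monic_char_poly[OF H] by auto
    then have "finite {z. poly (char_poly H) z = 0}" by (rule poly_roots_finite)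
    moreover have "Sx = complex_of_real -` {z. poly (char_poly H) z = 0}"
      unfolding Sx_def using eigenvalue_root_char_poly[OF H] by auto
    ultimately show ?thesis using finite_vimageI[of "{z. poly (char_poly H) z = 0}" complex_of_real]
      by (simp add: inj_on_def)
  qed
  have Max: "Max Sx = \<mu>" using fin muS le by (intro Max_eqI) auto
  have ms: "max_sv A = sqrt \<mu>" unfolding max_sv_def H_def[symmetric] Sx_def[symmetric] Max ..
  have mu0: "\<mu> \<ge> 0"
  proof -
    have "\<mu> * nsq v = nsq (A *\<^sub>v v)" using eigq[OF v(1) Hv] q[OF v(1)] by simp
    then have "\<mu> * nsq v \<ge> 0" using nsq_nonneg by simp
    then show ?thesis using nv by (metis linorder_not_le mult_neg_pos)
  qed
  show "max_sv A \<ge> 0" unfolding ms using mu0 by simp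
  show "nsq (A *\<^sub>v y) \<le> (max_sv A)^2 * nsq y" if y: "y \<in> carrier_vec c" for y
    unfolding ms using mu0 ray[OF y] q[OF y] by simp
  show "max_sv A \<le> C" if C: "C \<ge> 0" and b: "\<And>y. y \<in> carrier_vec c \<Longrightarrow> nsq (A *\<^sub>v y) \<le> C^2 * nsq y" for C
  proof -
    have "\<mu> * nsq v \<le> C^2 * nsq v" using b[OF v(1)] eigq[OF v(1) Hv] q[OF v(1)] by simp
    then have "\<mu> \<le> C^2" using nv by simp
    then show ?thesis unfolding ms using C real_sqrt_le_mono[of \<mu> "C^2"] by simp
  qed
qed


section \<open>Inverse via injectivity\<close>

lemma minv_props:
  assumes A: "(A :: complex mat) \<in> carrier_mat k k"
    and inj: "\<And>z. z \<in> carrier_vec k \<Longrightarrow> A *\<^sub>v z = 0\<^sub>v k \<Longrightarrow> z = 0\<^sub>v k"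
  shows "minv A \<in> carrier_mat k k \<and> A * minv A = 1\<^sub>m k \<and> minv A * A = 1\<^sub>m k"
proof -
  have "det A \<noteq> 0" using det_0_iff_vec_prod_zero[OF A] inj by auto
  then have U: "A \<in> Units (ring_mat TYPE(complex) k undefined)" by (rule det_non_zero_imp_unit[OF A])
  obtain B where B: "mat_inverse A = Some B"
    using mat_inverse(1)[OF A, of undefined] U by (cases "mat_inverse A") auto
  have ex: "B \<in> carrier_mat k k \<and> A * B = 1\<^sub>m k \<and> B * A = 1\<^sub>m k" using mat_inverse(2)[OF A B] by auto
  have "minv A \<in> carrier_mat (dim_row A) (dim_row A) \<and> A * minv A = 1\<^sub>m (dim_row A) \<and> minv A * A = 1\<^sub>m (dim_row A)"
    unfolding minv_def by (rule someI[of _ B]) (use ex A in auto)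
  then show ?thesis using A by simp
qed

lemma minv_solve:
  assumes A: "(A :: complex mat) \<in> carrier_mat k k"
    and inj: "\<And>z. z \<in> carrier_vec k \<Longrightarrow> A *\<^sub>v z = 0\<^sub>v k \<Longrightarrow> z = 0\<^sub>v k"
    and z: "z \<in> carrier_vec k" and Az: "A *\<^sub>v z = u"
  shows "minv A *\<^sub>v u = z"
proof -
  note P = minv_props[OF A inj]
  have "minv A *\<^sub>v u = (minv A * A) *\<^sub>v z" unfolding Az[symmetric] using P A z
    by (intro assoc_mult_mat_vec[symmetric, of _ k k _ k]) auto
  then show ?thesis using P z by simp
qed

lemma minv_sol:
  assumes A: "(A :: complex mat) \<in> carrier_mat k k"
    and inj: "\<And>z. z \<in> carrier_vec k \<Longrightarrow> A *\<^sub>v z = 0\<^sub>v k \<Longrightarrow> z = 0\<^sub>v k"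
    and u: "u \<in> carrier_vec k"
  shows "minv A *\<^sub>v u \<in> carrier_vec k" "A *\<^sub>v (minv A *\<^sub>v u) = u"
proof -
  note P = minv_props[OF A inj]
  show "minv A *\<^sub>v u \<in> carrier_vec k" using P u by auto
  have "A *\<^sub>v (minv A *\<^sub>v u) = (A * minv A) *\<^sub>v u" using P A u
    by (intro assoc_mult_mat_vec[symmetric, of _ k k _ k]) auto
  then show "A *\<^sub>v (minv A *\<^sub>v u) = u" using P u by simp
qed

lemma nsq_add: "x \<in> carrier_vec n \<Longrightarrow> y \<in> carrier_vec n \<Longrightarrow> nsq (x + y) = nsq x + nsq y + 2 * Re (x \<bullet>c y)"
  unfolding nsq_def using cip_sym[of x n y]
  by (simp add: cip_add_left[of _ n] cip_add_right[of _ n])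

lemma nsq_minus: "x \<in> carrier_vec n \<Longrightarrow> y \<in> carrier_vec n \<Longrightarrow> nsq (x - y) = nsq x + nsq y - 2 * Re (x \<bullet>c y)"
  unfolding nsq_def using cip_sym[of x n y]
  by (simp add: cip_minus_left[of _ n] cip_minus_right[of _ n])

lemma nsq_smult: "x \<in> carrier_vec n \<Longrightarrow> nsq (complex_of_real r \<cdot>\<^sub>v x) = r^2 * nsq x"
  unfolding nsq_def by (simp add: cip_smult_right[of _ n] power2_eq_square)

lemma nsq_comb:
  assumes U: "U \<in> carrier_vec n" and V: "V \<in> carrier_vec n"
    and a: "a \<ge> 0" and b: "b \<ge> 0" and A: "A \<ge> 0" and B: "B \<ge> 0"
    and hU: "nsq U \<le> a * A" and hV: "nsq V \<le> b * B"
  shows "nsq (U - V) \<le> (a + b) * (A + B)"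
proof (cases "a = 0 \<or> b = 0")
  case True
  then show ?thesis
  proof
    assume "a = 0"
    then have "U = 0\<^sub>v n" using hU nsq_nonneg[of U] nsq_eq_0[OF U] by auto
    then have "nsq (U - V) = nsq V" using V nsq_minus[OF U V] by (simp add: nsq_def)
    then show ?thesis using hV \<open>a = 0\<close> a b A B by (smt (verit) mult_left_mono)
  next
    assume "b = 0"
    then have "V = 0\<^sub>v n" using hV nsq_nonneg[of V] nsq_eq_0[OF V] by auto
    then have "nsq (U - V) = nsq U" using U nsq_minus[OF U V] by (simp add: nsq_def)
    then show ?thesis using hU \<open>b = 0\<close> a b A B by (smt (verit) mult_left_mono)
  qed
next
  case False
  then have ap: "a > 0" and bp: "b > 0" using a b by auto
  define \<tau> where "\<tau> = b / a"
  have tp: "\<tau> > 0" unfolding \<tau>_def using ap bp by simp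
  have "0 \<le> nsq (complex_of_real \<tau> \<cdot>\<^sub>v U + V)" by (rule nsq_nonneg)
  also have "\<dots> = \<tau>^2 * nsq U + nsq V + 2 * \<tau> * Re (U \<bullet>c V)"
    using nsq_add[of "complex_of_real \<tau> \<cdot>\<^sub>v U" n V] U V nsq_smult[OF U, of \<tau>] by (simp add: cip_smult_left[of _ n])
  finally have cr: "- 2 * Re (U \<bullet>c V) \<le> \<tau> * nsq U + nsq V / \<tau>"
    using tp by (simp add: field_simps power2_eq_square)
  have "nsq (U - V) \<le> (1 + \<tau>) * nsq U + (1 + 1 / \<tau>) * nsq V"
    using nsq_minus[OF U V] cr by (simp add: algebra_simps)
  also have "\<dots> \<le> (1 + \<tau>) * (a * A) + (1 + 1 / \<tau>) * (b * B)"
    using hU hV tp by (intro add_mono mult_left_mono) auto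
  also have "\<dots> = (a + b) * (A + B)"
    unfolding \<tau>_def using ap bp by (simp add: field_simps)
  finally show ?thesis .
qed


lemma smult_mat_mult_vec: assumes A: "(A :: complex mat) \<in> carrier_mat r c" and x: "x \<in> carrier_vec c"
  shows "(a \<cdot>\<^sub>m A) *\<^sub>v x = a \<cdot>\<^sub>v (A *\<^sub>v x)"
proof (rule eq_vecI)
  fix i assume "i < dim_vec (a \<cdot>\<^sub>v (A *\<^sub>v x))"
  then have i: "i < r" using A by simp
  have "((a \<cdot>\<^sub>m A) *\<^sub>v x) $ i = (\<Sum>j<c. (a \<cdot>\<^sub>m A) $$ (i, j) * x $ j)"
    by (rule mult_mat_vec_sum[OF _ x i]) (use A in auto)
  also have "\<dots> = a * (\<Sum>j<c. A $$ (i, j) * x $ j)"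
    using A i by (simp add: sum_distrib_left mult.assoc)
  also have "\<dots> = (a \<cdot>\<^sub>v (A *\<^sub>v x)) $ i" using mult_mat_vec_sum[OF A x i] A i by simp
  finally show "((a \<cdot>\<^sub>m A) *\<^sub>v x) $ i = (a \<cdot>\<^sub>v (A *\<^sub>v x)) $ i" .
qed (use A in auto)

lemma sum_split_add: "(\<Sum>j<(p::nat) + q. f j) = (\<Sum>j<p. f j) + (\<Sum>j<q. f (p + j))"
  by (induct q) (simp_all add: add.assoc)

definition blk :: "nat \<Rightarrow> nat \<Rightarrow> nat \<Rightarrow> 'a mat \<Rightarrow> 'a mat \<Rightarrow> 'a mat" where
  "blk k p q B1 B2 = mat k (p + q) (\<lambda>(i, j). if j < p then B1 $$ (i, j) else B2 $$ (i, j - p))"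

definition vfst :: "nat \<Rightarrow> 'a vec \<Rightarrow> 'a vec" where "vfst p y = vec p (\<lambda>i. y $ i)"
definition vsnd :: "nat \<Rightarrow> nat \<Rightarrow> 'a vec \<Rightarrow> 'a vec" where "vsnd p q y = vec q (\<lambda>i. y $ (p + i))"
definition vjoin :: "nat \<Rightarrow> nat \<Rightarrow> 'a vec \<Rightarrow> 'a vec \<Rightarrow> 'a vec" where
  "vjoin p q a b = vec (p + q) (\<lambda>j. if j < p then a $ j else b $ (j - p))"

lemma vfst_carrier[simp]: "vfst p y \<in> carrier_vec p" unfolding vfst_def by simp
lemma vsnd_carrier[simp]: "vsnd p q y \<in> carrier_vec q" unfolding vsnd_def by simp
lemma vjoin_carrier[simp]: "vjoin p q a b \<in> carrier_vec (p + q)" unfolding vjoin_def by simp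
lemma vfst_vjoin[simp]: "a \<in> carrier_vec p \<Longrightarrow> vfst p (vjoin p q a b) = a"
  unfolding vfst_def vjoin_def by (intro eq_vecI) auto
lemma vsnd_vjoin[simp]: "b \<in> carrier_vec q \<Longrightarrow> vsnd p q (vjoin p q a b) = b"
  unfolding vsnd_def vjoin_def by (intro eq_vecI) auto

lemma blk_carrier[simp]: "blk k p q B1 B2 \<in> carrier_mat k (p + q)" unfolding blk_def by simp
lemma blk_dims[simp]: "dim_row (blk k p q B1 B2) = k" "dim_col (blk k p q B1 B2) = p + q" unfolding blk_def by simp_all

lemma blk_mult: assumes B1: "(B1 :: complex mat) \<in> carrier_mat k p" and B2: "B2 \<in> carrier_mat k q"
  and y: "y \<in> carrier_vec (p + q)"
  shows "blk k p q B1 B2 *\<^sub>v y = B1 *\<^sub>v vfst p y + B2 *\<^sub>v vsnd p q y"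
proof (rule eq_vecI)
  fix i assume "i < dim_vec (B1 *\<^sub>v vfst p y + B2 *\<^sub>v vsnd p q y)"
  then have i: "i < k" using B1 B2 by simp
  have "(blk k p q B1 B2 *\<^sub>v y) $ i = (\<Sum>j<p + q. blk k p q B1 B2 $$ (i, j) * y $ j)"
    by (rule mult_mat_vec_sum[OF blk_carrier y i])
  also have "\<dots> = (\<Sum>j<p. B1 $$ (i, j) * y $ j) + (\<Sum>j<q. B2 $$ (i, j) * y $ (p + j))"
    unfolding sum_split_add using i by (simp add: blk_def)
  also have "\<dots> = (B1 *\<^sub>v vfst p y + B2 *\<^sub>v vsnd p q y) $ i"
    using mult_mat_vec_sum[OF B1 vfst_carrier i] mult_mat_vec_sum[OF B2 vsnd_carrier i] B1 B2 i
    by (simp add: vfst_def vsnd_def)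
  finally show "(blk k p q B1 B2 *\<^sub>v y) $ i = (B1 *\<^sub>v vfst p y + B2 *\<^sub>v vsnd p q y) $ i" .
qed (use B1 B2 in auto)

lemma nsq_split: assumes y: "y \<in> carrier_vec (p + q)"
  shows "nsq y = nsq (vfst p y) + nsq (vsnd p q y)"
  unfolding nsq_sum[OF y] nsq_sum[OF vfst_carrier] nsq_sum[OF vsnd_carrier] sum_split_add
  by (simp add: vfst_def vsnd_def)

section \<open>Gram matrices\<close>

lemma adj_mult_vec_carrier[simp]: "F \<in> carrier_mat k p \<Longrightarrow> z \<in> carrier_vec k \<Longrightarrow> adjoint_c F *\<^sub>v z \<in> carrier_vec p"
  by (rule mult_mat_vec_carrier[OF adjoint_c_carrier])

lemma gram_carrier: "F \<in> carrier_mat k p \<Longrightarrow> F * adjoint_c F \<in> carrier_mat k k" by auto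

lemma gram_mult: assumes F: "F \<in> carrier_mat k p" and z: "z \<in> carrier_vec k"
  shows "(F * adjoint_c F) *\<^sub>v z = F *\<^sub>v (adjoint_c F *\<^sub>v z)"
  by (rule assoc_mult_mat_vec[OF F adjoint_c_carrier[OF F] z])

lemma gram_cross: assumes F: "F \<in> carrier_mat k p" and a: "a \<in> carrier_vec k" and b: "b \<in> carrier_vec k"
  shows "(adjoint_c F *\<^sub>v a) \<bullet>c (adjoint_c F *\<^sub>v b) = a \<bullet>c ((F * adjoint_c F) *\<^sub>v b)"
  using adjoint_c_cip[OF adjoint_c_carrier[OF F] a, of "adjoint_c F *\<^sub>v b"] F b gram_mult[OF F b] by simp

lemma gram_quad: assumes F: "F \<in> carrier_mat k p" and z: "z \<in> carrier_vec k"
  shows "((F * adjoint_c F) *\<^sub>v z) \<bullet>c z = complex_of_real (nsq (adjoint_c F *\<^sub>v z))"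
    "z \<bullet>c ((F * adjoint_c F) *\<^sub>v z) = complex_of_real (nsq (adjoint_c F *\<^sub>v z))"
proof -
  have Fz: "adjoint_c F *\<^sub>v z \<in> carrier_vec p" using F z by auto
  have Gz: "(F * adjoint_c F) *\<^sub>v z \<in> carrier_vec k" by (rule mult_mat_vec_carrier[OF gram_carrier[OF F] z])
  show 2: "z \<bullet>c ((F * adjoint_c F) *\<^sub>v z) = complex_of_real (nsq (adjoint_c F *\<^sub>v z))"
    using gram_cross[OF F z z] cip_self_real[OF Fz] by simp
  show "((F * adjoint_c F) *\<^sub>v z) \<bullet>c z = complex_of_real (nsq (adjoint_c F *\<^sub>v z))"
    using cip_sym[OF Gz z] 2 by (metis complex_cnj_cnj complex_cnj_complex_of_real)
qed

lemma gram_herm: assumes F: "F \<in> carrier_mat k p"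
  shows "adjoint_c (F * adjoint_c F) = F * adjoint_c F"
  using adjoint_c_mult[OF F adjoint_c_carrier[OF F]] by simp

lemma gram_sym: assumes F: "F \<in> carrier_mat k p" and a: "a \<in> carrier_vec k" and b: "b \<in> carrier_vec k"
  shows "((F * adjoint_c F) *\<^sub>v a) \<bullet>c b = a \<bullet>c ((F * adjoint_c F) *\<^sub>v b)"
  using adjoint_c_cip[OF gram_carrier[OF F] a b] gram_herm[OF F] by simp

lemma gram_inj: assumes F: "F \<in> carrier_mat k p"
  and inj: "\<And>x. x \<in> carrier_vec k \<Longrightarrow> adjoint_c F *\<^sub>v x = 0\<^sub>v p \<Longrightarrow> x = 0\<^sub>v k"
  and z: "z \<in> carrier_vec k" and G0: "(F * adjoint_c F) *\<^sub>v z = 0\<^sub>v k"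
  shows "z = 0\<^sub>v k"
proof -
  have Fz: "adjoint_c F *\<^sub>v z \<in> carrier_vec p" using F z by auto
  have "complex_of_real (nsq (adjoint_c F *\<^sub>v z)) = 0" using gram_quad(1)[OF F z] G0 z by simp
  then have "nsq (adjoint_c F *\<^sub>v z) = 0" by simp
  then show ?thesis using nsq_eq_0[OF Fz] inj[OF z] by simp
qed


section \<open>Abstract system\<close>

locale sysctx =
  fixes k p q :: nat and F N :: "complex mat" and \<sigma>w \<sigma>v :: real
  assumes F: "F \<in> carrier_mat k p" and N: "N \<in> carrier_mat k q"
    and injF: "\<And>x. x \<in> carrier_vec k \<Longrightarrow> adjoint_c F *\<^sub>v x = 0\<^sub>v p \<Longrightarrow> x = 0\<^sub>v k"
    and injN: "\<And>x. x \<in> carrier_vec k \<Longrightarrow> adjoint_c N *\<^sub>v x = 0\<^sub>v q \<Longrightarrow> x = 0\<^sub>v k"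
begin

abbreviation "L \<equiv> F * adjoint_c F"
abbreviation "M \<equiv> N * adjoint_c N"

definition Xm where "Xm s = s \<cdot>\<^sub>m 1\<^sub>m k + L * M"
definition Bm where "Bm = blk k p q (complex_of_real \<sigma>w \<cdot>\<^sub>m F) (complex_of_real (- \<sigma>v) \<cdot>\<^sub>m (L * N))"
definition Pim where "Pim s = adjoint_c N * minv (Xm s) * Bm"

lemma Lc: "L \<in> carrier_mat k k" using gram_carrier[OF F] .
lemma Mc: "M \<in> carrier_mat k k" using gram_carrier[OF N] .
lemma Xc: "Xm s \<in> carrier_mat k k" unfolding Xm_def using Lc Mc by auto
lemma Bc: "Bm \<in> carrier_mat k (p + q)" unfolding Bm_def by simp

lemma L_inj: "z \<in> carrier_vec k \<Longrightarrow> L *\<^sub>v z = 0\<^sub>v k \<Longrightarrow> z = 0\<^sub>v k"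
  using gram_inj[OF F injF] by blast
lemma M_inj: "z \<in> carrier_vec k \<Longrightarrow> M *\<^sub>v z = 0\<^sub>v k \<Longrightarrow> z = 0\<^sub>v k"
  using gram_inj[OF N injN] by blast

lemma Lv[simp]: "z \<in> carrier_vec k \<Longrightarrow> L *\<^sub>v z \<in> carrier_vec k" using Lc by auto
lemma Mv[simp]: "z \<in> carrier_vec k \<Longrightarrow> M *\<^sub>v z \<in> carrier_vec k" using Mc by auto
lemma Fv[simp]: "z \<in> carrier_vec p \<Longrightarrow> F *\<^sub>v z \<in> carrier_vec k" using F by auto
lemma Nv[simp]: "z \<in> carrier_vec q \<Longrightarrow> N *\<^sub>v z \<in> carrier_vec k" using N by auto
lemma FHv[simp]: "z \<in> carrier_vec k \<Longrightarrow> adjoint_c F *\<^sub>v z \<in> carrier_vec p" using F by simp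
lemma NHv[simp]: "z \<in> carrier_vec k \<Longrightarrow> adjoint_c N *\<^sub>v z \<in> carrier_vec q" using N by simp

lemma X_mult: assumes z: "z \<in> carrier_vec k"
  shows "Xm s *\<^sub>v z = s \<cdot>\<^sub>v z + L *\<^sub>v (M *\<^sub>v z)"
proof -
  have "Xm s *\<^sub>v z = (s \<cdot>\<^sub>m 1\<^sub>m k) *\<^sub>v z + (L * M) *\<^sub>v z"
    unfolding Xm_def by (rule add_mult_distrib_mat_vec[of _ k k]) (use Lc Mc z in auto)
  also have "(L * M) *\<^sub>v z = L *\<^sub>v (M *\<^sub>v z)" by (rule assoc_mult_mat_vec[OF Lc Mc z])
  finally show ?thesis unfolding smult_one_mult_vec[OF z] .
qed

lemma X_inj: assumes s: "Re s = 0" and z: "z \<in> carrier_vec k" and X0: "Xm s *\<^sub>v z = 0\<^sub>v k"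
  shows "z = 0\<^sub>v k"
proof -
  define w where "w = M *\<^sub>v z"
  have w: "w \<in> carrier_vec k" unfolding w_def using z by simp
  have "0 = (Xm s *\<^sub>v z) \<bullet>c w" unfolding X0 using w by simp
  also have "\<dots> = s * (z \<bullet>c w) + (L *\<^sub>v w) \<bullet>c w"
    unfolding X_mult[OF z] w_def[symmetric] using z w by (simp add: cip_add_left[of _ k])
  also have "z \<bullet>c w = complex_of_real (nsq (adjoint_c N *\<^sub>v z))"
    unfolding w_def by (rule gram_quad(2)[OF N z])
  also have "(L *\<^sub>v w) \<bullet>c w = complex_of_real (nsq (adjoint_c F *\<^sub>v w))"
    by (rule gram_quad(1)[OF F w])
  finally have "0 = s * complex_of_real (nsq (adjoint_c N *\<^sub>v z)) + complex_of_real (nsq (adjoint_c F *\<^sub>v w))" .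
  then have "Re 0 = Re (s * complex_of_real (nsq (adjoint_c N *\<^sub>v z)) + complex_of_real (nsq (adjoint_c F *\<^sub>v w)))"
    by simp
  then have "nsq (adjoint_c F *\<^sub>v w) = 0" using s by simp
  then have "w = 0\<^sub>v k" using nsq_eq_0[of "adjoint_c F *\<^sub>v w" p] injF[OF w] w by simp
  then show ?thesis using M_inj[OF z] unfolding w_def by simp
qed

lemma B_mult: assumes y: "y \<in> carrier_vec (p + q)"
  shows "Bm *\<^sub>v y = complex_of_real \<sigma>w \<cdot>\<^sub>v (F *\<^sub>v vfst p y) + complex_of_real (- \<sigma>v) \<cdot>\<^sub>v (L *\<^sub>v (N *\<^sub>v vsnd p q y))"
proof -
  have LN: "L * N \<in> carrier_mat k q" using Lc N by auto
  have "Bm *\<^sub>v y = (complex_of_real \<sigma>w \<cdot>\<^sub>m F) *\<^sub>v vfst p y + (complex_of_real (- \<sigma>v) \<cdot>\<^sub>m (L * N)) *\<^sub>v vsnd p q y"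
    unfolding Bm_def by (rule blk_mult[OF _ _ y]) (use F LN in auto)
  also have "\<dots> = complex_of_real \<sigma>w \<cdot>\<^sub>v (F *\<^sub>v vfst p y) + complex_of_real (- \<sigma>v) \<cdot>\<^sub>v ((L * N) *\<^sub>v vsnd p q y)"
    using smult_mat_mult_vec[OF F vfst_carrier] smult_mat_mult_vec[OF LN vsnd_carrier] by simp
  also have "(L * N) *\<^sub>v vsnd p q y = L *\<^sub>v (N *\<^sub>v vsnd p q y)" by (rule assoc_mult_mat_vec[OF Lc N vsnd_carrier])
  finally show ?thesis .
qed

lemma Pi_mult: assumes s: "Re s = 0" and y: "y \<in> carrier_vec (p + q)"
  shows "Pim s *\<^sub>v y = adjoint_c N *\<^sub>v (minv (Xm s) *\<^sub>v (Bm *\<^sub>v y))"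
proof -
  have mi: "minv (Xm s) \<in> carrier_mat k k" using minv_props[OF Xc X_inj[OF s]] by blast
  have NH: "adjoint_c N \<in> carrier_mat q k" using N by simp
  show ?thesis unfolding Pim_def using NH mi Bc y
    by (simp add: assoc_mult_mat_vec[of _ q k _ k] assoc_mult_mat_vec[of _ k k _ "p + q"] assoc_mult_mat_vec[of _ q k _ "p + q"])
qed

lemma L_eq: assumes a: "a \<in> carrier_vec k" and b: "b \<in> carrier_vec k" and e: "L *\<^sub>v a = L *\<^sub>v b"
  shows "a = b"
proof -
  have "L *\<^sub>v (a - b) = L *\<^sub>v a - L *\<^sub>v b" by (rule mult_minus_distrib_mat_vec[OF Lc a b])
  also have "\<dots> = 0\<^sub>v k" using e Lc b by simp
  finally have ab: "a - b = 0\<^sub>v k" using L_inj[of "a - b"] a b by simp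
  show ?thesis
  proof (rule eq_vecI)
    fix i assume "i < dim_vec b"
    then have i: "i < k" using b by simp
    have "(a - b) $ i = 0" using ab i by simp
    then show "a $ i = b $ i" using a b i by simp
  qed (use a b in simp)
qed

lemma ub:
  assumes s: "Re s = 0" and y: "y \<in> carrier_vec (p + q)"
    and g: "g \<in> carrier_vec k" and Lg: "L *\<^sub>v g = F *\<^sub>v vfst p y"
    and h: "h \<in> carrier_vec k" and Mh: "M *\<^sub>v h = g"
    and c1: "c1 \<ge> 0" and hc: "\<sigma>w^2 * nsq (adjoint_c N *\<^sub>v h) \<le> c1 * nsq (vfst p y)"
  shows "nsq (Pim s *\<^sub>v y) \<le> (c1 + \<sigma>v^2) * nsq y"
proof -
  define ya where "ya = vfst p y"
  define yb where "yb = vsnd p q y"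
  have ya: "ya \<in> carrier_vec p" and yb: "yb \<in> carrier_vec q" by (simp_all add: ya_def yb_def)
  define u where "u = Bm *\<^sub>v y"
  have u: "u \<in> carrier_vec k" using Bc y by (auto simp: u_def)
  define z where "z = minv (Xm s) *\<^sub>v u"
  have z: "z \<in> carrier_vec k" and Xz: "Xm s *\<^sub>v z = u"
    using minv_sol[OF Xc X_inj[OF s] u] z_def by auto
  have Pi: "Pim s *\<^sub>v y = adjoint_c N *\<^sub>v z" using Pi_mult[OF s y] u_def z_def by simp
  obtain h2 where h2: "h2 \<in> carrier_vec k" and Mh2: "M *\<^sub>v h2 = N *\<^sub>v yb"
    using minv_sol[OF Mc M_inj, of "N *\<^sub>v yb"] yb by auto
  define v where "v = complex_of_real \<sigma>w \<cdot>\<^sub>v h + complex_of_real (- \<sigma>v) \<cdot>\<^sub>v h2"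
  have v: "v \<in> carrier_vec k" unfolding v_def using h h2 by simp
  have Mv: "M *\<^sub>v v = complex_of_real \<sigma>w \<cdot>\<^sub>v g + complex_of_real (- \<sigma>v) \<cdot>\<^sub>v (N *\<^sub>v yb)"
    unfolding v_def using h h2
    by (simp add: mult_add_distrib_mat_vec[OF Mc] mult_mat_vec[OF Mc] Mh Mh2)
  have LMv: "L *\<^sub>v (M *\<^sub>v v) = u"
    unfolding Mv u_def B_mult[OF y] using g yb
    by (simp add: mult_add_distrib_mat_vec[OF Lc] mult_mat_vec[OF Lc] Lg ya_def yb_def)
  obtain t where t: "t \<in> carrier_vec k" and Lt: "L *\<^sub>v t = z"
    using minv_sol[OF Lc L_inj z] by blast
  define d where "d = v - z"
  have d: "d \<in> carrier_vec k" unfolding d_def using v z by simp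
  have Md: "M *\<^sub>v d = s \<cdot>\<^sub>v t"
  proof -
    have e1: "s \<cdot>\<^sub>v z + L *\<^sub>v (M *\<^sub>v z) = L *\<^sub>v (M *\<^sub>v v)" using X_mult[OF z] Xz LMv by simp
    have "L *\<^sub>v (s \<cdot>\<^sub>v t + M *\<^sub>v z) = s \<cdot>\<^sub>v z + L *\<^sub>v (M *\<^sub>v z)"
      using t z Lt by (simp add: mult_add_distrib_mat_vec[OF Lc] mult_mat_vec[OF Lc])
    then have "s \<cdot>\<^sub>v t + M *\<^sub>v z = M *\<^sub>v v" using e1 L_eq[of "s \<cdot>\<^sub>v t + M *\<^sub>v z" "M *\<^sub>v v"] t z v by simp
    moreover have "M *\<^sub>v d = M *\<^sub>v v - M *\<^sub>v z" unfolding d_def by (rule mult_minus_distrib_mat_vec[OF Mc v z])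
    ultimately show ?thesis
    proof (intro eq_vecI)
      fix i assume e: "s \<cdot>\<^sub>v t + M *\<^sub>v z = M *\<^sub>v v" and e2: "M *\<^sub>v d = M *\<^sub>v v - M *\<^sub>v z" and "i < dim_vec (s \<cdot>\<^sub>v t)"
      then have i: "i < k" using t by simp
      have "(s \<cdot>\<^sub>v t + M *\<^sub>v z) $ i = (M *\<^sub>v v) $ i" using e by simp
      moreover have "(s \<cdot>\<^sub>v t + M *\<^sub>v z) $ i = s * t $ i + (M *\<^sub>v z) $ i"
        using i t z N by (simp del: index_mult_mat_vec)
      ultimately have f1: "s * t $ i + (M *\<^sub>v z) $ i = (M *\<^sub>v v) $ i" by simp
      have f2: "(M *\<^sub>v v - M *\<^sub>v z) $ i = (M *\<^sub>v v) $ i - (M *\<^sub>v z) $ i"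
        using i v z N by (simp del: index_mult_mat_vec)
      show "(M *\<^sub>v d) $ i = (s \<cdot>\<^sub>v t) $ i" unfolding e2 f2 f1[symmetric] using i t by simp
    qed (use d t Mc in auto)
  qed
  have cross: "Re ((adjoint_c N *\<^sub>v z) \<bullet>c (adjoint_c N *\<^sub>v d)) = 0"
  proof -
    have "(adjoint_c N *\<^sub>v z) \<bullet>c (adjoint_c N *\<^sub>v d) = z \<bullet>c (M *\<^sub>v d)" by (rule gram_cross[OF N z d])
    also have "\<dots> = cnj s * (z \<bullet>c t)" unfolding Md using z t by (simp add: cip_smult_right[of _ k])
    also have "z \<bullet>c t = complex_of_real (nsq (adjoint_c F *\<^sub>v t))" unfolding Lt[symmetric] by (rule gram_quad(1)[OF F t])
    finally show ?thesis using s by simp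
  qed
  have vzd: "v = z + d" unfolding d_def using v z by (intro eq_vecI) auto
  have "nsq (adjoint_c N *\<^sub>v v) = nsq (adjoint_c N *\<^sub>v z) + nsq (adjoint_c N *\<^sub>v d)"
  proof -
    have "adjoint_c N *\<^sub>v v = adjoint_c N *\<^sub>v z + adjoint_c N *\<^sub>v d"
      unfolding vzd by (rule mult_add_distrib_mat_vec[OF adjoint_c_carrier[OF N] z d])
    then show ?thesis using nsq_add[of "adjoint_c N *\<^sub>v z" q "adjoint_c N *\<^sub>v d"] cross z d by simp
  qed
  then have zv: "nsq (adjoint_c N *\<^sub>v z) \<le> nsq (adjoint_c N *\<^sub>v v)" using nsq_nonneg[of "adjoint_c N *\<^sub>v d"] by simp
  define U where "U = complex_of_real \<sigma>w \<cdot>\<^sub>v (adjoint_c N *\<^sub>v h)"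
  define V where "V = complex_of_real \<sigma>v \<cdot>\<^sub>v (adjoint_c N *\<^sub>v h2)"
  have U: "U \<in> carrier_vec q" and V: "V \<in> carrier_vec q" unfolding U_def V_def using h h2 by simp_all
  have NHv_eq: "adjoint_c N *\<^sub>v v = U - V"
  proof -
    have "adjoint_c N *\<^sub>v v = complex_of_real \<sigma>w \<cdot>\<^sub>v (adjoint_c N *\<^sub>v h) + complex_of_real (- \<sigma>v) \<cdot>\<^sub>v (adjoint_c N *\<^sub>v h2)"
      unfolding v_def using h h2
      by (simp add: mult_add_distrib_mat_vec[OF adjoint_c_carrier[OF N]] mult_mat_vec[OF adjoint_c_carrier[OF N]])
    then show ?thesis unfolding U_def V_def using h h2 by (intro eq_vecI) auto
  qed
  have proj: "nsq (adjoint_c N *\<^sub>v h2) \<le> nsq yb"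
  proof -
    define Y where "Y = adjoint_c N *\<^sub>v h2"
    have Y: "Y \<in> carrier_vec q" unfolding Y_def using h2 by simp
    have "h2 \<bullet>c (M *\<^sub>v h2) = complex_of_real (nsq Y)" unfolding Y_def by (rule gram_quad(2)[OF N h2])
    then have a1: "Re (h2 \<bullet>c (N *\<^sub>v yb)) = nsq Y" unfolding Mh2 by simp
    have "(N *\<^sub>v yb) \<bullet>c h2 = yb \<bullet>c Y" unfolding Y_def by (rule adjoint_c_cip[OF N yb h2])
    moreover have "h2 \<bullet>c (N *\<^sub>v yb) = cnj ((N *\<^sub>v yb) \<bullet>c h2)" by (rule cip_sym) (use yb h2 in auto)
    ultimately have "Re (yb \<bullet>c Y) = nsq Y" using a1 by simp
    then have "nsq (yb - Y) = nsq yb - nsq Y" using nsq_minus[OF yb Y] by simp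
    then show ?thesis using nsq_nonneg[of "yb - Y"] Y_def by simp
  qed
  have hU: "nsq U \<le> c1 * nsq ya" unfolding U_def nsq_smult[OF NHv[OF h]] using hc ya_def by simp
  have hV: "nsq V \<le> \<sigma>v^2 * nsq yb" unfolding V_def nsq_smult[OF NHv[OF h2]]
    using proj by (simp add: mult_left_mono)
  have "nsq (Pim s *\<^sub>v y) \<le> nsq (U - V)" using Pi zv NHv_eq by simp
  also have "\<dots> \<le> (c1 + \<sigma>v^2) * (nsq ya + nsq yb)"
    by (rule nsq_comb[OF U V c1 _ nsq_nonneg nsq_nonneg hU hV]) simp
  also have "nsq ya + nsq yb = nsq y" using nsq_split[OF y] ya_def yb_def by simp
  finally show ?thesis .
qed

lemma Pic: assumes s: "Re s = 0" shows "Pim s \<in> carrier_mat q (p + q)"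
proof -
  have mi: "minv (Xm s) \<in> carrier_mat k k" using minv_props[OF Xc X_inj[OF s]] by blast
  show ?thesis unfolding Pim_def using mi Bc N by auto
qed

lemma lb:
  assumes pq: "0 < p + q" and g: "g \<in> carrier_vec k" and g0: "g \<noteq> 0\<^sub>v k"
    and h: "h \<in> carrier_vec k" and Mh: "M *\<^sub>v h = g"
  shows "\<sigma>w^2 * nsq (adjoint_c N *\<^sub>v h) + \<sigma>v^2 * nsq (adjoint_c F *\<^sub>v g)
         \<le> (max_sv (Pim 0))^2 * nsq (adjoint_c F *\<^sub>v g)"
proof -
  define P where "P = nsq (adjoint_c N *\<^sub>v h)"
  define Q where "Q = nsq (adjoint_c F *\<^sub>v g)"
  define S where "S = max_sv (Pim 0)"
  have h0: "h \<noteq> 0\<^sub>v k"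
  proof
    assume "h = 0\<^sub>v k"
    then have "M *\<^sub>v h = 0\<^sub>v k" using Mc by (intro eq_vecI) (auto simp: scalar_prod_def)
    then show False using g0 Mh by simp
  qed
  have Ppos: "P > 0" unfolding P_def using nsq_eq_0[of "adjoint_c N *\<^sub>v h" q] nsq_nonneg[of "adjoint_c N *\<^sub>v h"] injN[OF h] h0 h
    by fastforce
  have Qpos: "Q > 0" unfolding Q_def using nsq_eq_0[of "adjoint_c F *\<^sub>v g" p] nsq_nonneg[of "adjoint_c F *\<^sub>v g"] injF[OF g] g0 g
    by fastforce
  define c where "c = \<sigma>w^2 * P + \<sigma>v^2 * Q"
  have c0: "c \<ge> 0" unfolding c_def using Ppos Qpos by simp
  define a where "a = complex_of_real (\<sigma>w * P) \<cdot>\<^sub>v (adjoint_c F *\<^sub>v g)"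
  define b where "b = complex_of_real (- \<sigma>v * Q) \<cdot>\<^sub>v (adjoint_c N *\<^sub>v h)"
  have a: "a \<in> carrier_vec p" and b: "b \<in> carrier_vec q" unfolding a_def b_def using g h by simp_all
  define y where "y = vjoin p q a b"
  have y: "y \<in> carrier_vec (p + q)" unfolding y_def by simp
  have Fa: "F *\<^sub>v a = complex_of_real (\<sigma>w * P) \<cdot>\<^sub>v (L *\<^sub>v g)"
    unfolding a_def using g by (simp add: mult_mat_vec[OF F] gram_mult[OF F g])
  have Nb: "N *\<^sub>v b = complex_of_real (- \<sigma>v * Q) \<cdot>\<^sub>v g"
    unfolding b_def using h by (simp add: mult_mat_vec[OF N] gram_mult[OF N h, symmetric] Mh)
  have By: "Bm *\<^sub>v y = complex_of_real c \<cdot>\<^sub>v (L *\<^sub>v g)"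
  proof -
    have "Bm *\<^sub>v y = complex_of_real \<sigma>w \<cdot>\<^sub>v (complex_of_real (\<sigma>w * P) \<cdot>\<^sub>v (L *\<^sub>v g))
       + complex_of_real (- \<sigma>v) \<cdot>\<^sub>v (complex_of_real (- \<sigma>v * Q) \<cdot>\<^sub>v (L *\<^sub>v g))"
      unfolding B_mult[OF y] using g Fa Nb vfst_vjoin[OF a] vsnd_vjoin[OF b] unfolding y_def
      by (simp add: mult_mat_vec[OF Lc])
    also have "\<dots> = complex_of_real c \<cdot>\<^sub>v (L *\<^sub>v g)"
      unfolding c_def using g by (intro eq_vecI) (auto simp: algebra_simps power2_eq_square)
    finally show ?thesis .
  qed
  define z where "z = complex_of_real c \<cdot>\<^sub>v h"
  have z: "z \<in> carrier_vec k" unfolding z_def using h by simp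
  have "Xm 0 *\<^sub>v z = 0 \<cdot>\<^sub>v z + L *\<^sub>v (M *\<^sub>v z)" by (rule X_mult[OF z])
  also have "\<dots> = 0 \<cdot>\<^sub>v z + complex_of_real c \<cdot>\<^sub>v (L *\<^sub>v g)"
    unfolding z_def using h g by (simp add: mult_mat_vec[OF Mc] mult_mat_vec[OF Lc] Mh)
  also have "\<dots> = complex_of_real c \<cdot>\<^sub>v (L *\<^sub>v g)"
    using z g Lv[OF g] F by (intro eq_vecI) (auto simp del: index_mult_mat_vec)
  finally have Xz: "Xm 0 *\<^sub>v z = Bm *\<^sub>v y" unfolding By .
  have mz: "minv (Xm 0) *\<^sub>v (Bm *\<^sub>v y) = z"
    by (rule minv_solve[OF Xc X_inj z Xz]) simp_all
  have Piy: "Pim 0 *\<^sub>v y = complex_of_real c \<cdot>\<^sub>v (adjoint_c N *\<^sub>v h)"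
    using Pi_mult[of 0 y] y mz unfolding z_def using h by (simp add: mult_mat_vec[OF adjoint_c_carrier[OF N]])
  have n1: "nsq (Pim 0 *\<^sub>v y) = c^2 * P" unfolding Piy P_def using h by (simp add: nsq_smult[of _ q])
  have na: "nsq a = (\<sigma>w * P)^2 * Q" unfolding a_def Q_def by (rule nsq_smult[of _ p]) (use g in simp)
  have nb: "nsq b = (- \<sigma>v * Q)^2 * P" unfolding b_def P_def by (rule nsq_smult[of _ q]) (use h in simp)
  have "nsq y = nsq a + nsq b" using nsq_split[OF y] vfst_vjoin[OF a] vsnd_vjoin[OF b] unfolding y_def by simp
  then have n2: "nsq y = (\<sigma>w * P)^2 * Q + (\<sigma>v * Q)^2 * P" using na nb by (simp add: power2_eq_square)
  have "nsq (Pim 0 *\<^sub>v y) \<le> S^2 * nsq y" unfolding S_def by (rule max_sv_char(2)[OF Pic pq y]) simp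
  then have "c^2 * P \<le> S^2 * (P * Q * c)" unfolding n1 n2 c_def by (simp add: algebra_simps power2_eq_square)
  then have "c * c \<le> (S^2 * Q) * c" using Ppos by (simp add: algebra_simps power2_eq_square)
  then have "c \<le> S^2 * Q"
    using c0 Qpos by (cases "c = 0") (auto simp: mult_le_cancel_right)
  then show ?thesis unfolding c_def P_def Q_def S_def .
qed

end


lemma gram_proj: assumes F: "F \<in> carrier_mat k p" and a: "a \<in> carrier_vec p" and g: "g \<in> carrier_vec k"
  and Lg: "(F * adjoint_c F) *\<^sub>v g = F *\<^sub>v a"
  shows "nsq (adjoint_c F *\<^sub>v g) \<le> nsq a"
proof -
  define Y where "Y = adjoint_c F *\<^sub>v g"
  have Y: "Y \<in> carrier_vec p" unfolding Y_def using F g by simp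
  have Fa: "F *\<^sub>v a \<in> carrier_vec k" using F a by auto
  have "g \<bullet>c ((F * adjoint_c F) *\<^sub>v g) = complex_of_real (nsq Y)" unfolding Y_def by (rule gram_quad(2)[OF F g])
  then have a1: "Re (g \<bullet>c (F *\<^sub>v a)) = nsq Y" unfolding Lg by simp
  have "(F *\<^sub>v a) \<bullet>c g = a \<bullet>c Y" unfolding Y_def by (rule adjoint_c_cip[OF F a g])
  moreover have "g \<bullet>c (F *\<^sub>v a) = cnj ((F *\<^sub>v a) \<bullet>c g)" by (rule cip_sym[OF Fa g])
  ultimately have "Re (a \<bullet>c Y) = nsq Y" using a1 by simp
  then have "nsq (a - Y) = nsq a - nsq Y" using nsq_minus[OF a Y] by simp
  then show ?thesis using nsq_nonneg[of "a - Y"] Y_def by simp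
qed

lemma Re_cip_sym: "x \<in> carrier_vec n \<Longrightarrow> y \<in> carrier_vec n \<Longrightarrow> Re (y \<bullet>c x) = Re (x \<bullet>c y)"
  using cip_sym[of x n y] by simp

lemma gram_anti:
  assumes N1: "N1 \<in> carrier_mat k q" and N2: "N2 \<in> carrier_mat k q"
    and hN: "\<And>x. x \<in> carrier_vec k \<Longrightarrow> nsq (adjoint_c N2 *\<^sub>v x) \<le> nsq (adjoint_c N1 *\<^sub>v x)"
    and h1: "h1 \<in> carrier_vec k" and h2: "h2 \<in> carrier_vec k" and g: "g \<in> carrier_vec k"
    and M1: "(N1 * adjoint_c N1) *\<^sub>v h1 = g" and M2: "(N2 * adjoint_c N2) *\<^sub>v h2 = g"
  shows "nsq (adjoint_c N1 *\<^sub>v h1) \<le> nsq (adjoint_c N2 *\<^sub>v h2)"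
proof -
  have a1: "adjoint_c N2 *\<^sub>v h1 \<in> carrier_vec q" "adjoint_c N2 *\<^sub>v h2 \<in> carrier_vec q" using N2 h1 h2 by simp_all
  have "adjoint_c N2 *\<^sub>v (h2 - h1) = adjoint_c N2 *\<^sub>v h2 - adjoint_c N2 *\<^sub>v h1"
    by (rule mult_minus_distrib_mat_vec[OF adjoint_c_carrier[OF N2] h2 h1])
  then have "0 \<le> nsq (adjoint_c N2 *\<^sub>v h2 - adjoint_c N2 *\<^sub>v h1)" using nsq_nonneg by metis
  also have "\<dots> = nsq (adjoint_c N2 *\<^sub>v h2) + nsq (adjoint_c N2 *\<^sub>v h1)
      - 2 * Re ((adjoint_c N2 *\<^sub>v h2) \<bullet>c (adjoint_c N2 *\<^sub>v h1))" by (rule nsq_minus[OF a1(2) a1(1)])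
  also have "Re ((adjoint_c N2 *\<^sub>v h2) \<bullet>c (adjoint_c N2 *\<^sub>v h1)) = Re ((adjoint_c N2 *\<^sub>v h1) \<bullet>c (adjoint_c N2 *\<^sub>v h2))"
    by (rule Re_cip_sym[OF a1(1) a1(2)])
  also have "(adjoint_c N2 *\<^sub>v h1) \<bullet>c (adjoint_c N2 *\<^sub>v h2) = h1 \<bullet>c g"
    using gram_cross[OF N2 h1 h2] M2 by simp
  also have "h1 \<bullet>c g = complex_of_real (nsq (adjoint_c N1 *\<^sub>v h1))"
    using gram_quad(2)[OF N1 h1] M1 by simp
  finally show ?thesis using hN[OF h1] by simp
qed

lemma compare:
  assumes S1: "sysctx k p q F1 N1" and S2: "sysctx k p q F2 N2"
    and k: "0 < k" and pq: "0 < p + q"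
    and hF: "\<And>x. x \<in> carrier_vec k \<Longrightarrow> nsq (adjoint_c F2 *\<^sub>v x) \<le> nsq (adjoint_c F1 *\<^sub>v x)"
    and hN: "\<And>x. x \<in> carrier_vec k \<Longrightarrow> nsq (adjoint_c N2 *\<^sub>v x) \<le> nsq (adjoint_c N1 *\<^sub>v x)"
    and s: "Re s = 0"
  shows "max_sv (sysctx.Pim k p q F1 N1 \<sigma>w \<sigma>v s) \<le> max_sv (sysctx.Pim k p q F2 N2 \<sigma>w \<sigma>v 0)"
proof -
  interpret A: sysctx k p q F1 N1 \<sigma>w \<sigma>v by (rule S1)
  interpret B: sysctx k p q F2 N2 \<sigma>w \<sigma>v by (rule S2)
  define S where "S = max_sv (B.Pim 0)"
  have S0: "S \<ge> 0" unfolding S_def by (rule max_sv_char(1)[OF B.Pic pq]) simp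
  have Sv: "\<sigma>v^2 \<le> S^2"
  proof -
    define g0 :: "complex vec" where "g0 = unit_vec k 0"
    have g0: "g0 \<in> carrier_vec k" "g0 \<noteq> 0\<^sub>v k" unfolding g0_def using k
      by (auto simp: unit_vec_def vec_eq_iff)
    obtain h0 where h0: "h0 \<in> carrier_vec k" and Mh0: "B.M *\<^sub>v h0 = g0"
      using minv_sol[OF B.Mc B.M_inj g0(1)] by blast
    have Q: "nsq (adjoint_c F2 *\<^sub>v g0) > 0"
      using nsq_eq_0[of "adjoint_c F2 *\<^sub>v g0" p] nsq_nonneg[of "adjoint_c F2 *\<^sub>v g0"] B.injF[OF g0(1)] g0 B.FHv[OF g0(1)]
      by fastforce
    have "\<sigma>v^2 * nsq (adjoint_c F2 *\<^sub>v g0) \<le> S^2 * nsq (adjoint_c F2 *\<^sub>v g0)"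
      using B.lb[OF pq g0 h0 Mh0] nsq_nonneg[of "adjoint_c N2 *\<^sub>v h0"] unfolding S_def
      by (smt (verit) zero_le_power2 mult_nonneg_nonneg)
    then show ?thesis using Q by simp
  qed
  show ?thesis unfolding S_def[symmetric]
  proof (rule max_sv_char(3)[OF A.Pic[OF s] pq S0])
    fix y :: "complex vec" assume y: "y \<in> carrier_vec (p + q)"
    define ya where "ya = vfst p y"
    have ya: "ya \<in> carrier_vec p" unfolding ya_def by simp
    obtain g where g: "g \<in> carrier_vec k" and Lg: "A.L *\<^sub>v g = F1 *\<^sub>v ya"
      using minv_sol[OF A.Lc A.L_inj, of "F1 *\<^sub>v ya"] ya by auto
    obtain h1 where h1: "h1 \<in> carrier_vec k" and Mh1: "A.M *\<^sub>v h1 = g"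
      using minv_sol[OF A.Mc A.M_inj g] by blast
    have hc: "\<sigma>w^2 * nsq (adjoint_c N1 *\<^sub>v h1) \<le> (S^2 - \<sigma>v^2) * nsq ya"
    proof (cases "g = 0\<^sub>v k")
      case True
      then have "h1 = 0\<^sub>v k" using A.M_inj[OF h1] Mh1 by simp
      then have "adjoint_c N1 *\<^sub>v h1 = 0\<^sub>v q" using A.N by (intro eq_vecI) (auto simp: scalar_prod_def)
      then have "nsq (adjoint_c N1 *\<^sub>v h1) = 0" by (simp add: nsq_def)
      then show ?thesis using Sv nsq_nonneg[of ya] by simp
    next
      case False
      obtain h2 where h2: "h2 \<in> carrier_vec k" and Mh2: "B.M *\<^sub>v h2 = g"
        using minv_sol[OF B.Mc B.M_inj g] by blast
      have lb: "\<sigma>w^2 * nsq (adjoint_c N2 *\<^sub>v h2) + \<sigma>v^2 * nsq (adjoint_c F2 *\<^sub>v g)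
         \<le> S^2 * nsq (adjoint_c F2 *\<^sub>v g)" using B.lb[OF pq g False h2 Mh2] unfolding S_def .
      have P: "nsq (adjoint_c N1 *\<^sub>v h1) \<le> nsq (adjoint_c N2 *\<^sub>v h2)"
        by (rule gram_anti[OF A.N B.N hN h1 h2 g Mh1 Mh2])
      have Q1: "nsq (adjoint_c F2 *\<^sub>v g) \<le> nsq (adjoint_c F1 *\<^sub>v g)" by (rule hF[OF g])
      have Q2: "nsq (adjoint_c F1 *\<^sub>v g) \<le> nsq ya" by (rule gram_proj[OF A.F ya g Lg])
      have "\<sigma>w^2 * nsq (adjoint_c N1 *\<^sub>v h1) \<le> \<sigma>w^2 * nsq (adjoint_c N2 *\<^sub>v h2)"
        using P by (simp add: mult_left_mono)
      also have "\<dots> \<le> (S^2 - \<sigma>v^2) * nsq (adjoint_c F2 *\<^sub>v g)" using lb by (simp add: algebra_simps)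
      also have "\<dots> \<le> (S^2 - \<sigma>v^2) * nsq ya"
        using Q1 Q2 Sv by (intro mult_left_mono) auto
      finally show ?thesis .
    qed
    have "nsq (A.Pim s *\<^sub>v y) \<le> (S^2 - \<sigma>v^2 + \<sigma>v^2) * nsq y"
      by (rule A.ub[OF s y g Lg[unfolded ya_def] h1 Mh1 _ hc[unfolded ya_def]]) (use Sv in simp)
    then show "nsq (A.Pim s *\<^sub>v y) \<le> S^2 * nsq y" by simp
  qed
qed


lemma diag_powr_carrier[simp]: "E \<in> carrier_mat r r \<Longrightarrow> diag_powr E a \<in> carrier_mat r r"
  unfolding diag_powr_def by auto

lemma diag_powr_dims[simp]: "dim_row (diag_powr E a) = dim_row E" "dim_col (diag_powr E a) = dim_col E"
  unfolding diag_powr_def by auto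

lemma diag_powr_index: "i < dim_row E \<Longrightarrow> j < dim_col E \<Longrightarrow> diag_powr E a $$ (i, j) = (if i = j then E $$ (i, i) powr a else 0)"
  unfolding diag_powr_def by auto

lemma diag_powr_transpose: "E \<in> carrier_mat r r \<Longrightarrow> transpose_mat (diag_powr E a) = diag_powr E a"
  by (intro eq_matI) (auto simp: diag_powr_index)

lemma diag_powr_mult: assumes E: "pos_diag r E"
  shows "diag_powr E a * diag_powr E b = diag_powr E (a + b)"
proof -
  have Ec: "E \<in> carrier_mat r r" and pos: "\<And>i. i < r \<Longrightarrow> E $$ (i, i) > 0" using E unfolding pos_diag_def by auto
  show ?thesis
  proof (rule eq_matI)
    fix i j assume "i < dim_row (diag_powr E (a + b))" "j < dim_col (diag_powr E (a + b))"
    then have i: "i < r" and j: "j < r" using Ec by auto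
    have "(diag_powr E a * diag_powr E b) $$ (i, j) = (\<Sum>l<r. diag_powr E a $$ (i, l) * diag_powr E b $$ (l, j))"
      using i j Ec by (simp add: sprod_sum)
    also have "\<dots> = (\<Sum>l<r. if l = i then (if i = j then E $$ (i, i) powr a * E $$ (i, i) powr b else 0) else 0)"
      using i j Ec by (intro sum.cong) (auto simp: diag_powr_index)
    also have "\<dots> = (if i = j then E $$ (i, i) powr (a + b) else 0)" using i pos[OF i] by (simp add: powr_add)
    also have "\<dots> = diag_powr E (a + b) $$ (i, j)" using i j Ec by (simp add: diag_powr_index)
    finally show "(diag_powr E a * diag_powr E b) $$ (i, j) = diag_powr E (a + b) $$ (i, j)" .
  qed (use Ec in auto)
qed

lemma diag_powr_one: assumes E: "pos_diag r E" shows "diag_powr E 1 = E"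
proof -
  have Ec: "E \<in> carrier_mat r r" and pos: "\<And>i. i < r \<Longrightarrow> E $$ (i, i) > 0" and dg: "diagonal_mat E"
    using E unfolding pos_diag_def by auto
  have ab: "\<And>i. i < r \<Longrightarrow> \<bar>E $$ (i, i)\<bar> = E $$ (i, i)" using pos by (simp add: less_imp_le)
  show ?thesis using Ec ab dg by (intro eq_matI) (auto simp: diag_powr_index diagonal_mat_def)
qed

lemma pos_diag_scalar: "c > 0 \<Longrightarrow> pos_diag r (c \<cdot>\<^sub>m 1\<^sub>m r)"
  unfolding pos_diag_def diagonal_mat_def by auto

lemma loewner_lower: assumes "loewner_le r (c \<cdot>\<^sub>m 1\<^sub>m r) E" and i: "i < r"
  shows "c \<le> E $$ (i, i)"
proof -
  have Ec: "E \<in> carrier_mat r r" and q: "\<And>x. x \<in> carrier_vec r \<Longrightarrow> x \<bullet> ((E - c \<cdot>\<^sub>m 1\<^sub>m r) *\<^sub>v x) \<ge> 0"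
    using assms unfolding loewner_le_def by auto
  have u: "unit_vec r i \<in> carrier_vec r" by simp
  have Eu: "(E - c \<cdot>\<^sub>m 1\<^sub>m r) *\<^sub>v unit_vec r i \<in> carrier_vec r" by (rule mult_mat_vec_carrier[of _ r r]) (use Ec in auto)
  have "unit_vec r i \<bullet> ((E - c \<cdot>\<^sub>m 1\<^sub>m r) *\<^sub>v unit_vec r i) = ((E - c \<cdot>\<^sub>m 1\<^sub>m r) *\<^sub>v unit_vec r i) $ i"
    by (rule scalar_prod_left_unit[OF Eu i])
  also have "\<dots> = E $$ (i, i) - c" using Ec i by simp
  finally show ?thesis using q[OF u] by simp
qed

lemma loewner_upper: assumes "loewner_le r W (c \<cdot>\<^sub>m 1\<^sub>m r)" and i: "i < r"
  shows "W $$ (i, i) \<le> c"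
proof -
  have Wc: "W \<in> carrier_mat r r" and q: "\<And>x. x \<in> carrier_vec r \<Longrightarrow> x \<bullet> ((c \<cdot>\<^sub>m 1\<^sub>m r - W) *\<^sub>v x) \<ge> 0"
    using assms unfolding loewner_le_def by auto
  have u: "unit_vec r i \<in> carrier_vec r" by simp
  have Eu: "(c \<cdot>\<^sub>m 1\<^sub>m r - W) *\<^sub>v unit_vec r i \<in> carrier_vec r" by (rule mult_mat_vec_carrier[of _ r r]) (use Wc in auto)
  have "unit_vec r i \<bullet> ((c \<cdot>\<^sub>m 1\<^sub>m r - W) *\<^sub>v unit_vec r i) = ((c \<cdot>\<^sub>m 1\<^sub>m r - W) *\<^sub>v unit_vec r i) $ i"
    by (rule scalar_prod_left_unit[OF Eu i])
  also have "\<dots> = c - W $$ (i, i)" using Wc i by simp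
  finally show ?thesis using q[OF u] by simp
qed

abbreviation cmap :: "real mat \<Rightarrow> complex mat" where "cmap \<equiv> map_mat complex_of_real"

lemma cmap_mult: "A \<in> carrier_mat r n \<Longrightarrow> B \<in> carrier_mat n c \<Longrightarrow> cmap (A * B) = cmap A * cmap B"
  by (rule of_real_hom.mat_hom_mult)

lemma diag_mult_vec_index:
  assumes D: "D \<in> carrier_mat r r" and C: "C \<in> carrier_mat r c" and x: "x \<in> carrier_vec c" and i: "i < r"
  shows "(cmap (diag_powr D a * C) *\<^sub>v x) $ i = complex_of_real (D $$ (i, i) powr a) * (cmap C *\<^sub>v x) $ i"
proof -
  have "cmap (diag_powr D a * C) *\<^sub>v x = cmap (diag_powr D a) *\<^sub>v (cmap C *\<^sub>v x)"
    using D C x by (simp add: cmap_mult[of _ r r _ c] assoc_mult_mat_vec[of _ r r _ c])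
  also have "(cmap (diag_powr D a) *\<^sub>v (cmap C *\<^sub>v x)) $ i = (\<Sum>j<r. cmap (diag_powr D a) $$ (i, j) * (cmap C *\<^sub>v x) $ j)"
    by (rule mult_mat_vec_sum) (use D C x i in auto)
  also have "\<dots> = (\<Sum>j<r. if j = i then complex_of_real (D $$ (i, i) powr a) * (cmap C *\<^sub>v x) $ i else 0)"
    using D i by (intro sum.cong) (auto simp: diag_powr_index)
  also have "\<dots> = complex_of_real (D $$ (i, i) powr a) * (cmap C *\<^sub>v x) $ i" using i by simp
  finally show ?thesis .
qed

lemma diag_mult_nsq:
  assumes D: "D \<in> carrier_mat r r" and C: "C \<in> carrier_mat r c" and x: "x \<in> carrier_vec c"
  shows "nsq (cmap (diag_powr D a * C) *\<^sub>v x) = (\<Sum>i<r. (D $$ (i, i) powr a)^2 * (cmod ((cmap C *\<^sub>v x) $ i))^2)"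
proof -
  have c: "cmap (diag_powr D a * C) *\<^sub>v x \<in> carrier_vec r" by (rule mult_mat_vec_carrier[of _ r c]) (use D C x in auto)
  show ?thesis unfolding nsq_sum[OF c]
    by (intro sum.cong refl) (simp add: diag_mult_vec_index[OF D C x] norm_mult power_mult_distrib)
qed


section \<open>Graph: incidence of the spanning tree has full column rank\<close>

lemma D_tau_carrier[simp]: "D_tau n es \<in> carrier_mat n (n - 1)" unfolding D_tau_def by (rule mat_carrier)
lemma D_tau_carrier'[simp]: "D_tau n es \<in> carrier_mat n (n - Suc 0)" using D_tau_carrier by simp
lemma D_tau_dims[simp]: "dim_row (D_tau n es) = n" "dim_col (D_tau n es) = n - 1" unfolding D_tau_def by simp_all

lemma D_tau_entry: assumes "i < n" "l < n - 1" "n - 1 \<le> length es"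
  shows "D_tau n es $$ (i, l) = (if fst (es ! l) = i then 1 else if snd (es ! l) = i then -1 else 0)"
  using assms unfolding D_tau_def incidence_def by auto

lemma D_tau_col_sum:
  assumes l: "l < n - 1" and len: "n - 1 \<le> length es" and ab: "fst (es ! l) \<noteq> snd (es ! l)"
    and a: "fst (es ! l) < n" and b: "snd (es ! l) < n"
  shows "(\<Sum>i<n. complex_of_real (D_tau n es $$ (i, l)) * z i) = z (fst (es ! l)) - z (snd (es ! l))"
proof -
  have "(\<Sum>i<n. complex_of_real (D_tau n es $$ (i, l)) * z i)
      = (\<Sum>i<n. (if i = fst (es ! l) then z i else 0) - (if i = snd (es ! l) then z i else 0))"
    using l len ab by (intro sum.cong) (auto simp: D_tau_entry)
  also have "\<dots> = z (fst (es ! l)) - z (snd (es ! l))" using a b by (simp add: sum_subtractf)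
  finally show ?thesis .
qed

lemma D_tau_inj:
  assumes vg: "valid_graph n es" and st: "first_edges_spanning_tree n es" and n: "n \<ge> 2"
    and x: "x \<in> carrier_vec (n - 1)" and Dx: "cmap (D_tau n es) *\<^sub>v x = 0\<^sub>v n"
  shows "x = 0\<^sub>v (n - 1)"
proof -
  define k where "k = n - 1"
  have nk: "n = Suc k" unfolding k_def using n by simp
  have len: "k \<le> length es" and conn: "graph_connected n (take k es)"
    using st unfolding first_edges_spanning_tree_def k_def by auto
  have edges: "\<And>a b. (a, b) \<in> set es \<Longrightarrow> a < n \<and> b < n \<and> a \<noteq> b"
    using vg unfolding valid_graph_def by auto
  define D where "D = cmap (D_tau n es)"
  have Dc: "D \<in> carrier_mat n k" unfolding D_def k_def using D_tau_carrier[of n es] by (simp del: D_tau_carrier)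
  define Dr where "Dr = mat k k (\<lambda>(i, l). D $$ (i + 1, l))"
  have Drc: "Dr \<in> carrier_mat k k" unfolding Dr_def by simp
  have injT: "z = 0\<^sub>v k" if z: "z \<in> carrier_vec k" and Tz: "transpose_mat Dr *\<^sub>v z = 0\<^sub>v k" for z
  proof -
    define z' where "z' = (\<lambda>i. if i = 0 then 0 else z $ (i - 1))"
    have eq_edge: "z' (fst (es ! l)) = z' (snd (es ! l))" if l: "l < k" for l
    proof -
      have lk: "l < length es" using l len by simp
      have e: "es ! l \<in> set es" using lk by simp
      have ab: "fst (es ! l) < n" "snd (es ! l) < n" "fst (es ! l) \<noteq> snd (es ! l)"
        using edges[of "fst (es ! l)" "snd (es ! l)"] e by auto
      have "0 = (transpose_mat Dr *\<^sub>v z) $ l" using Tz l by simp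
      also have "\<dots> = (\<Sum>i<k. transpose_mat Dr $$ (l, i) * z $ i)"
        by (rule mult_mat_vec_sum[OF _ z l]) (use Drc in auto)
      also have "\<dots> = (\<Sum>i<k. complex_of_real (D_tau n es $$ (i + 1, l)) * z' (i + 1))"
        using l Drc Dc by (intro sum.cong refl) (auto simp: Dr_def D_def z'_def k_def)
      also have "\<dots> = (\<Sum>i<n. complex_of_real (D_tau n es $$ (i, l)) * z' i)"
        unfolding nk sum.lessThan_Suc_shift by (simp add: z'_def)
      also have "\<dots> = z' (fst (es ! l)) - z' (snd (es ! l))"
        by (rule D_tau_col_sum) (use l len ab in \<open>auto simp: k_def\<close>)
      finally show ?thesis by simp
    qed
    have reach: "z' j = z' 0" if "(0, j) \<in> (undirected_rel (take k es))\<^sup>*" for j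
      using that
    proof (induction rule: rtrancl_induct)
      case base then show ?case by simp
    next
      case (step u w)
      from step(2) have "(u, w) \<in> set (take k es) \<or> (w, u) \<in> set (take k es)"
        unfolding undirected_rel_def by auto
      then have "z' u = z' w"
      proof
        assume "(u, w) \<in> set (take k es)"
        then obtain l where l: "l < length (take k es)" and el: "take k es ! l = (u, w)"
          by (auto simp: in_set_conv_nth)
        then have "l < k" "es ! l = (u, w)" by auto
        then show ?thesis using eq_edge by force
      next
        assume "(w, u) \<in> set (take k es)"
        then obtain l where l: "l < length (take k es)" and el: "take k es ! l = (w, u)"
          by (auto simp: in_set_conv_nth)
        then have "l < k" "es ! l = (w, u)" by auto
        then show ?thesis using eq_edge by force
      qed
      then show ?case using step(3) by simp
    qed
    show ?thesis
    proof (rule eq_vecI)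
      fix i assume "i < dim_vec (0\<^sub>v k :: complex vec)"
      then have i: "i < k" by simp
      have "(0, i + 1) \<in> (undirected_rel (take k es))\<^sup>*"
        using conn i unfolding graph_connected_def nk by auto
      then have "z' (i + 1) = z' 0" by (rule reach)
      then show "z $ i = 0\<^sub>v k $ i" using i by (simp add: z'_def)
    qed (use z in simp)
  qed
  have "det (transpose_mat Dr) \<noteq> 0"
    using det_0_iff_vec_prod_zero[of "transpose_mat Dr" k] Drc injT by auto
  then have "det Dr \<noteq> 0" using det_transpose[OF Drc] by simp
  then have injDr: "\<And>v. v \<in> carrier_vec k \<Longrightarrow> Dr *\<^sub>v v = 0\<^sub>v k \<Longrightarrow> v = 0\<^sub>v k"
    using det_0_iff_vec_prod_zero[OF Drc] by auto
  have "Dr *\<^sub>v x = 0\<^sub>v k"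
  proof (rule eq_vecI)
    fix i assume "i < dim_vec (0\<^sub>v k :: complex vec)"
    then have i: "i < k" by simp
    have xk: "x \<in> carrier_vec k" using x k_def by simp
    have "(Dr *\<^sub>v x) $ i = (\<Sum>l<k. Dr $$ (i, l) * x $ l)" by (rule mult_mat_vec_sum[OF Drc xk i])
    also have "\<dots> = (\<Sum>l<k. D $$ (i + 1, l) * x $ l)" using i by (intro sum.cong) (auto simp: Dr_def)
    also have "\<dots> = (D *\<^sub>v x) $ (i + 1)" using mult_mat_vec_sum[OF Dc xk, of "i + 1"] i nk by simp
    also have "\<dots> = 0" using Dx i nk unfolding D_def by simp
    finally show "(Dr *\<^sub>v x) $ i = 0\<^sub>v k $ i" using i by simp
  qed (use Drc in simp)
  then show ?thesis using injDr x unfolding k_def by simp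
qed


section \<open>The concrete system as an instance\<close>

lemma R_mat_carrier[simp]: "R_mat n es \<in> carrier_mat (n - 1) (length es)"
  unfolding R_mat_def by (rule mat_carrier)
lemma R_mat_carrier'[simp]: "R_mat n es \<in> carrier_mat (n - Suc 0) (length es)" using R_mat_carrier by simp
lemma R_mat_dims[simp]: "dim_row (R_mat n es) = n - 1" "dim_col (R_mat n es) = length es" unfolding R_mat_def by simp_all

definition Fof :: "nat \<Rightarrow> (nat \<times> nat) list \<Rightarrow> real mat \<Rightarrow> complex mat" where
  "Fof n es E = cmap (transpose_mat (D_tau n es) * diag_powr E (-1/2))"
definition Nof :: "nat \<Rightarrow> (nat \<times> nat) list \<Rightarrow> real mat \<Rightarrow> complex mat" where
  "Nof n es W = cmap (R_mat n es * diag_powr W (1/2))"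

lemma pos_diag_carrier: "pos_diag r E \<Longrightarrow> E \<in> carrier_mat r r" unfolding pos_diag_def by auto

lemma Fof_carrier: assumes "pos_diag n E" shows "Fof n es E \<in> carrier_mat (n - 1) n"
proof -
  have "transpose_mat (D_tau n es) * diag_powr E (-1/2) \<in> carrier_mat (n - 1) n"
    by (rule mult_carrier_mat[of _ _ n]) (use pos_diag_carrier[OF assms] in auto)
  then show ?thesis unfolding Fof_def by simp
qed

lemma Nof_carrier: assumes "pos_diag (length es) W" shows "Nof n es W \<in> carrier_mat (n - 1) (length es)"
proof -
  have "R_mat n es * diag_powr W (1/2) \<in> carrier_mat (n - 1) (length es)"
    by (rule mult_carrier_mat[of _ _ "length es"]) (use pos_diag_carrier[OF assms] in auto)
  then show ?thesis unfolding Nof_def by simp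
qed

lemma adj_Fof: assumes E: "pos_diag n E"
  shows "adjoint_c (Fof n es E) = cmap (diag_powr E (-1/2) * D_tau n es)"
proof -
  have Ec: "E \<in> carrier_mat n n" by (rule pos_diag_carrier[OF E])
  have "transpose_mat (transpose_mat (D_tau n es) * diag_powr E (-1/2))
      = transpose_mat (diag_powr E (-1/2)) * transpose_mat (transpose_mat (D_tau n es))"
    by (rule transpose_mult[of _ "n - 1" n _ n]) (use Ec in auto)
  then show ?thesis unfolding Fof_def adjoint_c_map_real using diag_powr_transpose[OF Ec] by simp
qed

lemma adj_Nof: assumes W: "pos_diag (length es) W"
  shows "adjoint_c (Nof n es W) = cmap (diag_powr W (1/2) * transpose_mat (R_mat n es))"
proof -
  have Wc: "W \<in> carrier_mat (length es) (length es)" by (rule pos_diag_carrier[OF W])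
  have "transpose_mat (R_mat n es * diag_powr W (1/2))
      = transpose_mat (diag_powr W (1/2)) * transpose_mat (R_mat n es)"
    by (rule transpose_mult[of _ "n - 1" "length es" _ "length es"]) (use Wc in auto)
  then show ?thesis unfolding Nof_def adjoint_c_map_real using diag_powr_transpose[OF Wc] by simp
qed

lemma conc_sysctx:
  assumes vg: "valid_graph n es" and st: "first_edges_spanning_tree n es" and n: "n \<ge> 2"
    and E: "pos_diag n E" and W: "pos_diag (length es) W"
  shows "sysctx (n - 1) n (length es) (Fof n es E) (Nof n es W)"
proof
  have Ec: "E \<in> carrier_mat n n" and Epos: "\<And>i. i < n \<Longrightarrow> E $$ (i, i) > 0" using E unfolding pos_diag_def by auto
  have Wc: "W \<in> carrier_mat (length es) (length es)" and Wpos: "\<And>i. i < length es \<Longrightarrow> W $$ (i, i) > 0"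
    using W unfolding pos_diag_def by auto
  have len: "n - 1 \<le> length es" using st unfolding first_edges_spanning_tree_def by auto
  show "Fof n es E \<in> carrier_mat (n - 1) n" by (rule Fof_carrier[OF E])
  show "Nof n es W \<in> carrier_mat (n - 1) (length es)" by (rule Nof_carrier[OF W])
  show "x = 0\<^sub>v (n - 1)" if x: "x \<in> carrier_vec (n - 1)" and F0: "adjoint_c (Fof n es E) *\<^sub>v x = 0\<^sub>v n" for x
  proof (rule D_tau_inj[OF vg st n x])
    show "cmap (D_tau n es) *\<^sub>v x = 0\<^sub>v n"
    proof (rule eq_vecI)
      fix i assume "i < dim_vec (0\<^sub>v n :: complex vec)"
      then have i: "i < n" by simp
      have "0 = (adjoint_c (Fof n es E) *\<^sub>v x) $ i" using F0 i by simp
      also have "\<dots> = complex_of_real (E $$ (i, i) powr (-1/2)) * (cmap (D_tau n es) *\<^sub>v x) $ i"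
        unfolding adj_Fof[OF E] by (rule diag_mult_vec_index[OF Ec D_tau_carrier x i])
      finally show "(cmap (D_tau n es) *\<^sub>v x) $ i = 0\<^sub>v n $ i" using Epos[OF i] i by simp
    qed (use x in simp)
  qed
  show "x = 0\<^sub>v (n - 1)" if x: "x \<in> carrier_vec (n - 1)" and N0: "adjoint_c (Nof n es W) *\<^sub>v x = 0\<^sub>v (length es)" for x
  proof (rule eq_vecI)
    fix l assume "l < dim_vec (0\<^sub>v (n - 1) :: complex vec)"
    then have l: "l < n - 1" by simp
    then have lm: "l < length es" using len by simp
    have RT: "transpose_mat (R_mat n es) \<in> carrier_mat (length es) (n - 1)" by simp
    have "0 = (adjoint_c (Nof n es W) *\<^sub>v x) $ l" using N0 lm by simp
    also have "\<dots> = complex_of_real (W $$ (l, l) powr (1/2)) * (cmap (transpose_mat (R_mat n es)) *\<^sub>v x) $ l"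
      unfolding adj_Nof[OF W] by (rule diag_mult_vec_index[OF Wc RT x lm])
    also have "(cmap (transpose_mat (R_mat n es)) *\<^sub>v x) $ l = (\<Sum>i<n - 1. cmap (transpose_mat (R_mat n es)) $$ (l, i) * x $ i)"
      by (rule mult_mat_vec_sum[OF _ x lm]) simp
    also have "\<dots> = (\<Sum>i<n - 1. if i = l then x $ l else 0)"
      using l lm by (intro sum.cong) (auto simp: R_mat_def)
    also have "\<dots> = x $ l" using l by simp
    finally show "x $ l = 0\<^sub>v (n - 1) $ l" using Wpos[OF lm] l by simp
  qed (use x in simp)
qed


lemma Pi_tau_eq:
  assumes E: "pos_diag n E" and W: "pos_diag (length es) W"
    and S: "sysctx (n - 1) n (length es) (Fof n es E) (Nof n es W)"
  shows "Pi_tau n es \<sigma>w \<sigma>v E W s = sysctx.Pim (n - 1) n (length es) (Fof n es E) (Nof n es W) \<sigma>w \<sigma>v s"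
proof -
  interpret S: sysctx "n - 1" n "length es" "Fof n es E" "Nof n es W" \<sigma>w \<sigma>v by (rule S)
  define m where "m = length es"
  define Dt where "Dt = D_tau n es"
  define R where "R = R_mat n es"
  define Eh where "Eh = diag_powr E (-1/2)"
  define Ei where "Ei = diag_powr E (-1)"
  define Wh where "Wh = diag_powr W (1/2)"
  define Lr where "Lr = L_es n es E"
  have Ec: "E \<in> carrier_mat n n" by (rule pos_diag_carrier[OF E])
  have Wc: "W \<in> carrier_mat m m" unfolding m_def by (rule pos_diag_carrier[OF W])
  have Dtc: "Dt \<in> carrier_mat n (n - 1)" unfolding Dt_def by simp
  have DTc: "transpose_mat Dt \<in> carrier_mat (n - 1) n" using Dtc by simp
  have Rc: "R \<in> carrier_mat (n - 1) m" unfolding R_def m_def by simp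
  have RTc: "transpose_mat R \<in> carrier_mat m (n - 1)" using Rc by simp
  have Ehc: "Eh \<in> carrier_mat n n" unfolding Eh_def using Ec by simp
  have Eic: "Ei \<in> carrier_mat n n" unfolding Ei_def using Ec by simp
  have Whc: "Wh \<in> carrier_mat m m" unfolding Wh_def using Wc by simp
  have Lr: "Lr = transpose_mat Dt * (Ei * Dt)"
    unfolding Lr_def L_es_def Dt_def[symmetric] Ei_def[symmetric] using DTc Eic Dtc by (simp add: assoc_mult_mat)
  have Lrc: "Lr \<in> carrier_mat (n - 1) (n - 1)" unfolding Lr using DTc Eic Dtc by auto
  have EhEh: "Eh * Eh = Ei" unfolding Eh_def Ei_def diag_powr_mult[OF E] by simp
  have WhWh: "Wh * Wh = W" unfolding Wh_def diag_powr_mult[OF W] using diag_powr_one[OF W] by simp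
  have F: "Fof n es E = cmap (transpose_mat Dt * Eh)" unfolding Fof_def Dt_def Eh_def ..
  have FH: "adjoint_c (Fof n es E) = cmap (Eh * Dt)" unfolding adj_Fof[OF E] Dt_def Eh_def ..
  have N: "Nof n es W = cmap (R * Wh)" unfolding Nof_def R_def Wh_def ..
  have NH: "adjoint_c (Nof n es W) = cmap (Wh * transpose_mat R)" unfolding adj_Nof[OF W] R_def Wh_def ..
  have FF: "Fof n es E * adjoint_c (Fof n es E) = cmap Lr"
  proof -
    have "Fof n es E * adjoint_c (Fof n es E) = cmap (transpose_mat Dt * Eh * (Eh * Dt))"
      unfolding FH unfolding F by (rule cmap_mult[symmetric]) (use DTc Ehc Dtc in auto)
    also have "transpose_mat Dt * Eh * (Eh * Dt) = transpose_mat Dt * (Eh * (Eh * Dt))"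
      using DTc Ehc Dtc by (simp add: assoc_mult_mat[of _ "n - 1" n _ n _ "n - 1"])
    also have "Eh * (Eh * Dt) = Eh * Eh * Dt" using Ehc Dtc by (simp add: assoc_mult_mat[of _ n n _ n _ "n - 1"])
    finally show ?thesis unfolding EhEh Lr .
  qed
  have NN: "Nof n es W * adjoint_c (Nof n es W) = cmap (R * (W * transpose_mat R))"
  proof -
    have "Nof n es W * adjoint_c (Nof n es W) = cmap (R * Wh * (Wh * transpose_mat R))"
      unfolding NH unfolding N by (rule cmap_mult[symmetric]) (use Rc Whc RTc in auto)
    also have "R * Wh * (Wh * transpose_mat R) = R * (Wh * (Wh * transpose_mat R))"
      using Rc Whc RTc by (simp add: assoc_mult_mat[of _ "n - 1" m _ m _ "n - 1"])
    also have "Wh * (Wh * transpose_mat R) = Wh * Wh * transpose_mat R"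
      using Whc RTc by (simp add: assoc_mult_mat[of _ m m _ m _ "n - 1"])
    finally show ?thesis unfolding WhWh .
  qed
  have A: "L_es n es E * R_mat n es * W * transpose_mat (R_mat n es) = Lr * (R * (W * transpose_mat R))"
    unfolding Lr_def[symmetric] R_def[symmetric] using Lrc Rc Wc RTc
    by (simp add: assoc_mult_mat[of _ "n - 1" "n - 1" _ m _ m] assoc_mult_mat[of _ "n - 1" m _ m _ "n - 1"]
      assoc_mult_mat[of _ "n - 1" "n - 1" _ m _ "n - 1"])
  have Xeq: "sysctx.Xm (n - 1) (Fof n es E) (Nof n es W) s
      = s \<cdot>\<^sub>m 1\<^sub>m (n - 1) + cmap (L_es n es E * R_mat n es * W * transpose_mat (R_mat n es))"
    unfolding S.Xm_def FF NN A using Lrc Rc Wc RTc by (simp add: cmap_mult[of _ "n - 1" "n - 1" _ "n - 1"])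
  have FFN: "Fof n es E * adjoint_c (Fof n es E) * Nof n es W = cmap (L_es n es E * R_mat n es * diag_powr W (1/2))"
  proof -
    have "Fof n es E * adjoint_c (Fof n es E) * Nof n es W = cmap (Lr * (R * Wh))"
      unfolding FF N by (rule cmap_mult[symmetric]) (use Lrc Rc Whc in auto)
    also have "Lr * (R * Wh) = L_es n es E * R_mat n es * diag_powr W (1/2)"
      unfolding Lr_def R_def Wh_def using Lrc Rc Whc
      by (simp add: Lr_def[symmetric] R_def[symmetric] Wh_def[symmetric] assoc_mult_mat[of _ "n - 1" "n - 1" _ m _ m])
    finally show ?thesis .
  qed
  have LRWc: "L_es n es E * R_mat n es * diag_powr W (1/2) \<in> carrier_mat (n - 1) m"
    using Lrc Rc Whc unfolding Lr_def R_def Wh_def by auto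
  have DEc: "transpose_mat (D_tau n es) * diag_powr E (-1/2) \<in> carrier_mat (n - 1) n"
    by (rule mult_carrier_mat[of _ _ n]) (use DTc Ehc in \<open>auto simp: Dt_def Eh_def\<close>)
  have Beq: "sysctx.Bm (n - 1) n (length es) (Fof n es E) (Nof n es W) \<sigma>w \<sigma>v
     = cmap (mat (n - 1) (n + length es) (\<lambda>(i, j). if j < n
          then (\<sigma>w \<cdot>\<^sub>m (transpose_mat (D_tau n es) * diag_powr E (-1/2))) $$ (i, j)
          else ((- \<sigma>v) \<cdot>\<^sub>m (L_es n es E * R_mat n es * diag_powr W (1/2))) $$ (i, j - n)))"
    unfolding S.Bm_def FFN unfolding Fof_def m_def[symmetric]
  proof (rule eq_matI)
    fix i j assume "i < dim_row (cmap (mat (n - 1) (n + m) (\<lambda>(i, j). if j < n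
          then (\<sigma>w \<cdot>\<^sub>m (transpose_mat (D_tau n es) * diag_powr E (-1/2))) $$ (i, j)
          else ((- \<sigma>v) \<cdot>\<^sub>m (L_es n es E * R_mat n es * diag_powr W (1/2))) $$ (i, j - n))))"
      "j < dim_col (cmap (mat (n - 1) (n + m) (\<lambda>(i, j). if j < n
          then (\<sigma>w \<cdot>\<^sub>m (transpose_mat (D_tau n es) * diag_powr E (-1/2))) $$ (i, j)
          else ((- \<sigma>v) \<cdot>\<^sub>m (L_es n es E * R_mat n es * diag_powr W (1/2))) $$ (i, j - n))))"
    then have i: "i < n - 1" and j: "j < n + m" by auto
    show "blk (n - 1) n m (complex_of_real \<sigma>w \<cdot>\<^sub>m cmap (transpose_mat (D_tau n es) * diag_powr E (-1/2)))
        (complex_of_real (- \<sigma>v) \<cdot>\<^sub>m cmap (L_es n es E * R_mat n es * diag_powr W (1/2))) $$ (i, j) =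
      cmap (mat (n - 1) (n + m) (\<lambda>(i, j). if j < n
          then (\<sigma>w \<cdot>\<^sub>m (transpose_mat (D_tau n es) * diag_powr E (-1/2))) $$ (i, j)
          else ((- \<sigma>v) \<cdot>\<^sub>m (L_es n es E * R_mat n es * diag_powr W (1/2))) $$ (i, j - n))) $$ (i, j)"
    proof (cases "j < n")
      case True then show ?thesis using i j carrier_matD[OF DEc] by (simp add: blk_def)
    next
      case False
      then have jm: "j - n < m" using j by simp
      show ?thesis using i j jm False carrier_matD[OF LRWc] by (simp add: blk_def)
    qed
  qed (use LRWc DEc in \<open>auto simp: blk_def\<close>)
  show ?thesis
    unfolding Pi_tau_def Let_def S.Pim_def Xeq Beq NH Wh_def R_def m_def by simp
qed


lemma hF_conc:
  assumes E: "pos_diag n E" and le: "loewner_le n (e \<cdot>\<^sub>m 1\<^sub>m n) E" and e: "e > 0"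
    and x: "x \<in> carrier_vec (n - 1)"
  shows "nsq (adjoint_c (Fof n es E) *\<^sub>v x) \<le> nsq (adjoint_c (Fof n es (e \<cdot>\<^sub>m 1\<^sub>m n)) *\<^sub>v x)"
proof -
  have Ec: "E \<in> carrier_mat n n" by (rule pos_diag_carrier[OF E])
  have E1: "pos_diag n (e \<cdot>\<^sub>m 1\<^sub>m n)" by (rule pos_diag_scalar[OF e])
  have E1c: "e \<cdot>\<^sub>m 1\<^sub>m n \<in> carrier_mat n n" by simp
  show ?thesis
    unfolding adj_Fof[OF E] adj_Fof[OF E1] diag_mult_nsq[OF Ec D_tau_carrier x] diag_mult_nsq[OF E1c D_tau_carrier x]
  proof (rule sum_mono)
    fix i assume "i \<in> {..<n}"
    then have i: "i < n" by simp
    have ei: "e \<le> E $$ (i, i)" by (rule loewner_lower[OF le i])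
    have "E $$ (i, i) powr (-1/2) \<le> e powr (-1/2)" by (rule powr_mono2') (use e ei in auto)
    then have "(E $$ (i, i) powr (-1/2))^2 \<le> (e powr (-1/2))^2" by (intro power_mono) auto
    then show "(E $$ (i, i) powr (-1/2))^2 * (cmod ((cmap (D_tau n es) *\<^sub>v x) $ i))^2
      \<le> ((e \<cdot>\<^sub>m 1\<^sub>m n) $$ (i, i) powr (-1/2))^2 * (cmod ((cmap (D_tau n es) *\<^sub>v x) $ i))^2"
      using i by (simp add: mult_right_mono)
  qed
qed

lemma hN_conc:
  assumes W: "pos_diag (length es) W" and le: "loewner_le (length es) W (w \<cdot>\<^sub>m 1\<^sub>m (length es))" and w: "w > 0"
    and x: "x \<in> carrier_vec (n - 1)"
  shows "nsq (adjoint_c (Nof n es W) *\<^sub>v x) \<le> nsq (adjoint_c (Nof n es (w \<cdot>\<^sub>m 1\<^sub>m (length es))) *\<^sub>v x)"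
proof -
  have Wc: "W \<in> carrier_mat (length es) (length es)" by (rule pos_diag_carrier[OF W])
  have Wpos: "\<And>i. i < length es \<Longrightarrow> W $$ (i, i) > 0" using W unfolding pos_diag_def by auto
  have W1: "pos_diag (length es) (w \<cdot>\<^sub>m 1\<^sub>m (length es))" by (rule pos_diag_scalar[OF w])
  have W1c: "w \<cdot>\<^sub>m 1\<^sub>m (length es) \<in> carrier_mat (length es) (length es)" by simp
  have RT: "transpose_mat (R_mat n es) \<in> carrier_mat (length es) (n - 1)" by simp
  show ?thesis
    unfolding adj_Nof[OF W] adj_Nof[OF W1]
      diag_mult_nsq[OF Wc RT x] diag_mult_nsq[OF W1c RT x]
  proof (rule sum_mono)
    fix i assume "i \<in> {..<length es}"
    then have i: "i < length es" by simp
    have wi: "W $$ (i, i) \<le> w" by (rule loewner_upper[OF le i])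
    have "W $$ (i, i) powr (1/2) \<le> w powr (1/2)" by (rule powr_mono2) (use Wpos[OF i] wi in auto)
    then have "(W $$ (i, i) powr (1/2))^2 \<le> (w powr (1/2))^2" by (intro power_mono) auto
    then show "(W $$ (i, i) powr (1/2))^2 * (cmod ((cmap (transpose_mat (R_mat n es)) *\<^sub>v x) $ i))^2
      \<le> ((w \<cdot>\<^sub>m 1\<^sub>m (length es)) $$ (i, i) powr (1/2))^2 * (cmod ((cmap (transpose_mat (R_mat n es)) *\<^sub>v x) $ i))^2"
      using i by (simp add: mult_right_mono)
  qed
qed

theorem proposition2:
  fixes n :: nat and es :: "(nat \<times> nat) list"
    and \<sigma>w \<sigma>v w_min w_max \<epsilon>_min \<epsilon>_max :: real
  assumes "n \<ge> 2"
    and "valid_graph n es"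
    and "graph_connected n es"
    and "first_edges_spanning_tree n es"
    and "0 < w_min" and "w_min \<le> w_max"
    and "0 < \<epsilon>_min" and "\<epsilon>_min \<le> \<epsilon>_max"
  shows "\<forall>E W. pos_diag n E \<and> pos_diag (length es) W
           \<and> loewner_le (length es) (w_min \<cdot>\<^sub>m 1\<^sub>m (length es)) W
           \<and> loewner_le (length es) W (w_max \<cdot>\<^sub>m 1\<^sub>m (length es))
           \<and> loewner_le n (\<epsilon>_min \<cdot>\<^sub>m 1\<^sub>m n) E
           \<and> loewner_le n E (\<epsilon>_max \<cdot>\<^sub>m 1\<^sub>m n)
         \<longrightarrow> hinf_norm (Pi_tau n es \<sigma>w \<sigma>v (\<epsilon>_min \<cdot>\<^sub>m 1\<^sub>m n) (w_max \<cdot>\<^sub>m 1\<^sub>m (length es)))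
             \<le> hinf_norm (Pi_tau n es \<sigma>w \<sigma>v E W)"
proof (intro allI impI)
  fix E W
  assume H: "pos_diag n E \<and> pos_diag (length es) W
           \<and> loewner_le (length es) (w_min \<cdot>\<^sub>m 1\<^sub>m (length es)) W
           \<and> loewner_le (length es) W (w_max \<cdot>\<^sub>m 1\<^sub>m (length es))
           \<and> loewner_le n (\<epsilon>_min \<cdot>\<^sub>m 1\<^sub>m n) E
           \<and> loewner_le n E (\<epsilon>_max \<cdot>\<^sub>m 1\<^sub>m n)"
  then have E: "pos_diag n E" and W: "pos_diag (length es) W"
    and leW: "loewner_le (length es) W (w_max \<cdot>\<^sub>m 1\<^sub>m (length es))"
    and leE: "loewner_le n (\<epsilon>_min \<cdot>\<^sub>m 1\<^sub>m n) E" by auto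
  have n: "n \<ge> 2" and vg: "valid_graph n es" and st: "first_edges_spanning_tree n es"
    using assms by auto
  have wpos: "w_max > 0" using assms by simp
  have epos: "\<epsilon>_min > 0" using assms by simp
  define m where "m = length es"
  define Eo where "Eo = \<epsilon>_min \<cdot>\<^sub>m 1\<^sub>m n"
  define Wo where "Wo = w_max \<cdot>\<^sub>m 1\<^sub>m (length es)"
  have Eo: "pos_diag n Eo" unfolding Eo_def by (rule pos_diag_scalar[OF epos])
  have Wo: "pos_diag (length es) Wo" unfolding Wo_def by (rule pos_diag_scalar[OF wpos])
  have S1: "sysctx (n - 1) n (length es) (Fof n es Eo) (Nof n es Wo)" by (rule conc_sysctx[OF vg st n Eo Wo])
  have S2: "sysctx (n - 1) n (length es) (Fof n es E) (Nof n es W)" by (rule conc_sysctx[OF vg st n E W])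
  have k: "0 < n - 1" using n by simp
  have pq: "0 < n + length es" using n by simp
  have hF: "nsq (adjoint_c (Fof n es E) *\<^sub>v x) \<le> nsq (adjoint_c (Fof n es Eo) *\<^sub>v x)" if "x \<in> carrier_vec (n - 1)" for x
    unfolding Eo_def by (rule hF_conc[OF E leE epos that])
  have hN: "nsq (adjoint_c (Nof n es W) *\<^sub>v x) \<le> nsq (adjoint_c (Nof n es Wo) *\<^sub>v x)" if "x \<in> carrier_vec (n - 1)" for x
    unfolding Wo_def by (rule hN_conc[OF W leW wpos that])
  define f where "f = (\<lambda>\<omega>::real. max_sv (Pi_tau n es \<sigma>w \<sigma>v E W (\<i> * complex_of_real \<omega>)))"
  define g where "g = (\<lambda>\<omega>::real. max_sv (Pi_tau n es \<sigma>w \<sigma>v Eo Wo (\<i> * complex_of_real \<omega>)))"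
  have f0: "f 0 = max_sv (sysctx.Pim (n - 1) n (length es) (Fof n es E) (Nof n es W) \<sigma>w \<sigma>v 0)"
    unfolding f_def using Pi_tau_eq[OF E W S2] by simp
  have fle: "f \<omega> \<le> f 0" for \<omega>
    unfolding f0 unfolding f_def Pi_tau_eq[OF E W S2]
    by (rule compare[OF S2 S2 k pq]) auto
  have gle: "g \<omega> \<le> f 0" for \<omega>
    unfolding f0 unfolding g_def Pi_tau_eq[OF Eo Wo S1]
    by (rule compare[OF S1 S2 k pq hF hN]) auto
  have bdd: "bdd_above (range f)" using fle by (intro bdd_aboveI) auto
  have "hinf_norm (Pi_tau n es \<sigma>w \<sigma>v Eo Wo) = (SUP \<omega>. g \<omega>)" unfolding hinf_norm_def g_def ..
  also have "\<dots> \<le> f 0" by (rule cSUP_least) (use gle in auto)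
  also have "\<dots> \<le> (SUP \<omega>. f \<omega>)" by (rule cSUP_upper[OF UNIV_I bdd])
  also have "\<dots> = hinf_norm (Pi_tau n es \<sigma>w \<sigma>v E W)" unfolding hinf_norm_def f_def ..
  finally show "hinf_norm (Pi_tau n es \<sigma>w \<sigma>v (\<epsilon>_min \<cdot>\<^sub>m 1\<^sub>m n) (w_max \<cdot>\<^sub>m 1\<^sub>m (length es)))
             \<le> hinf_norm (Pi_tau n es \<sigma>w \<sigma>v E W)" unfolding Eo_def Wo_def .
qed

end
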